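(* Let $(R,\Lambda,S)$ be a generalised Renner–Coxeter system with unit group $W=G(R)$, and put $\Lambda_\circ=\Lambda\setminus\{1\}$. For every $w\in W$ fix an arbitrary reduced word $\underline w$ over $S$. Then $R$ admits the monoid presentation with generating set $S\cup\Lambda_\circ$ and defining relations (COX1) $s^2=1$ for $s\in S$; (COX2) $sts\cdots=tst\cdots$ (both sides of length $m_{st}$) for distinct $s,t\in S$ such that $st$ has finite order $m_{st}$; (REN1) $se=es$ for $e\in\Lambda_\circ$, $s\in\lambda^\star(e)$; (REN2) $se=es=e$ for $e\in\Lambda_\circ$, $s\in\lambda_\star(e)$; (REN3) $e\,\underline w\,f=e\wedge_wf$ for $e,f\in\Lambda_\circ$, $w\in\mathrm{Red}(e,f)$.
   Context: For a monoid $R$, $E(R)$ is its set of idempotents, $G(R)$ its unit group. $R$ is factorisable if $R=E(R)G(R)=G(R)E(R)$ and idempotents commute; then $E(R)$ is a semilattice ($e\le f\iff ef=fe=e$) on which $G(R)$ acts by conjugation. For $e\in E(R)$, $W(e)=\{w\in G(R)\mid we=ew\}$, $W_\star(e)=\{w\mid we=ew=e\}$. For a Coxeter system $(W,S)$, $W_I$ is the subgroup generated by $I\subseteq S$. A generalised Renner–Coxeter system is a triple $(R,\Lambda,S)$ with: (ECS1) $R$ factorisable; (ECS2) $\Lambda\subseteq E(R)$ contains exactly one element of each $G(R)$-orbit and is closed under multiplication; (ECS3) $(G(R),S)$ is a Coxeter system; (ECS4) for $e_1\le e_2$ in $E(R)$ there are $w\in G(R)$, $f_1\le f_2$ in $\Lambda$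 with $wf_iw^{-1}=e_i$; (ECS5) for $e\in\Lambda$, $W(e)$, $W_\star(e)$ are of the form $W_I$; (ECS6) with $\lambda^\star(e)=\{s\in S\mid se=es\ne e\}$, $e\le f$ in $\Lambda$ implies $\lambda^\star(e)\subseteq\lambda^\star(f)$. Let $\lambda(e),\lambda_\star(e)\subseteq S$ with $W(e)=W_{\lambda(e)}$, $W_\star(e)=W_{\lambda_\star(e)}$. $\mathrm{Red}(e,f)$ is the set of $w\in W$ of minimal Coxeter length in $W_{\lambda(e)}wW_{\lambda(f)}$; for $e,f\in\Lambda_\circ$ and $w\in\mathrm{Red}(e,f)$ the product $ewf$ in $R$ lies in $\Lambda$ and is denoted $e\wedge_wf$. *)

theory Defs
  imports Main
begin

text \<open>The monoid R is the whole type 'a (class monoid_mult).\<close>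

definition units :: "'a::monoid_mult set" where
  "units = {x. \<exists>y. x * y = 1 \<and> y * x = 1}"

definition ginv :: "'a::monoid_mult \<Rightarrow> 'a" where
  "ginv x = (THE y. x * y = 1 \<and> y * x = 1)"

definition idems :: "'a::monoid_mult set" where
  "idems = {e. e * e = e}"

definition idem_le :: "'a::monoid_mult \<Rightarrow> 'a \<Rightarrow> bool" where
  "idem_le e f \<longleftrightarrow> e * f = e \<and> f * e = e"

definition has_order :: "'a::monoid_mult \<Rightarrow> nat \<Rightarrow> bool" where
  "has_order x m \<longleftrightarrow> 0 < m \<and> x ^ m = 1 \<and> (\<forall>k. 0 < k \<and> k < m \<longrightarrow> x ^ k \<noteq> 1)"

definition onestep :: "('b list \<times> 'b list) set \<Rightarrow> ('b list \<times> 'b list) set" where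
  "onestep Rel = {(p @ l @ q, p @ r @ q) | p l r q. (l, r) \<in> Rel}"

definition wcong :: "('b list \<times> 'b list) set \<Rightarrow> ('b list \<times> 'b list) set" where
  "wcong Rel = (onestep Rel \<union> (onestep Rel)\<inverse>)\<^sup>*"

text \<open>The monoid (the whole type) is presented by generators X and relations Rel, i.e. the
  canonical evaluation map from the presented monoid is an isomorphism.\<close>

definition presents :: "'a::monoid_mult set \<Rightarrow> ('a list \<times> 'a list) set \<Rightarrow> bool" where
  "presents X Rel \<longleftrightarrow>
     (\<forall>x::'a. \<exists>u \<in> lists X. prod_list u = x) \<and>
     (\<forall>u \<in> lists X. \<forall>v \<in> lists X. prod_list u = prod_list v \<longleftrightarrow> (u, v) \<in> wcong Rel)"

text \<open>Coxeter systems (W,S) with W the unit group: S generates W and W has the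
  presentation <S | (st)^m(s,t) = 1>, written as a monoid presentation (S consists of involutions).\<close>

definition coxeter_rels :: "'a::monoid_mult set \<Rightarrow> ('a list \<times> 'a list) set" where
  "coxeter_rels S = {([s, s], []) | s. s \<in> S} \<union>
     {(concat (replicate m [s, t]), []) | s t m. s \<in> S \<and> t \<in> S \<and> s \<noteq> t \<and> has_order (s * t) m}"

definition coxeter_system :: "'a::monoid_mult set \<Rightarrow> bool" where
  "coxeter_system S \<longleftrightarrow> S \<subseteq> units \<and>
     (\<forall>x \<in> units. \<exists>u \<in> lists S. prod_list u = x) \<and>
     (\<forall>u \<in> lists S. \<forall>v \<in> lists S. prod_list u = prod_list v \<longleftrightarrow> (u, v) \<in> wcong (coxeter_rels S))"

inductive_set subgen :: "'a::monoid_mult set \<Rightarrow> 'a set" for I where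
  one: "1 \<in> subgen I"
| gen: "x \<in> I \<Longrightarrow> x \<in> subgen I"
| mult: "x \<in> subgen I \<Longrightarrow> y \<in> subgen I \<Longrightarrow> x * y \<in> subgen I"
| inv: "x \<in> subgen I \<Longrightarrow> ginv x \<in> subgen I"

definition Wc :: "'a::monoid_mult \<Rightarrow> 'a set" where
  "Wc e = {w \<in> units. w * e = e * w}"

definition Ws :: "'a::monoid_mult \<Rightarrow> 'a set" where
  "Ws e = {w \<in> units. w * e = e \<and> e * w = e}"

definition lam :: "'a::monoid_mult set \<Rightarrow> 'a \<Rightarrow> 'a set" where
  "lam S e = (SOME I. I \<subseteq> S \<and> Wc e = subgen I)"

definition lam_low :: "'a::monoid_mult set \<Rightarrow> 'a \<Rightarrow> 'a set" where
  "lam_low S e = (SOME I. I \<subseteq> S \<and> Ws e = subgen I)"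

definition lam_up :: "'a::monoid_mult set \<Rightarrow> 'a \<Rightarrow> 'a set" where
  "lam_up S e = {s \<in> S. s * e = e * s \<and> s * e \<noteq> e}"

definition clen :: "'a::monoid_mult set \<Rightarrow> 'a \<Rightarrow> nat" where
  "clen S w = (LEAST n. \<exists>u \<in> lists S. length u = n \<and> prod_list u = w)"

definition Red :: "'a::monoid_mult set \<Rightarrow> 'a \<Rightarrow> 'a \<Rightarrow> 'a set" where
  "Red S e f = {w \<in> units. \<forall>x \<in> subgen (lam S e). \<forall>y \<in> subgen (lam S f).
                   clen S w \<le> clen S (x * w * y)}"

definition factorisable :: "'a::monoid_mult itself \<Rightarrow> bool" where
  "factorisable _ \<longleftrightarrow>
     (UNIV :: 'a set) = {e * g | e g. e \<in> idems \<and> g \<in> units} \<and>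
     (UNIV :: 'a set) = {g * e | e g. e \<in> idems \<and> g \<in> units} \<and>
     (\<forall>e \<in> (idems :: 'a set). \<forall>f \<in> idems. e * f = f * e)"

definition gen_renner_coxeter :: "'a::monoid_mult set \<Rightarrow> 'a set \<Rightarrow> bool" where
  "gen_renner_coxeter \<Lambda> S \<longleftrightarrow>
     factorisable TYPE('a) \<and>
     (\<Lambda> \<subseteq> idems \<and> (\<forall>e \<in> idems. \<exists>!f. f \<in> \<Lambda> \<and> (\<exists>w \<in> units. w * f * ginv w = e))
        \<and> (\<forall>e \<in> \<Lambda>. \<forall>f \<in> \<Lambda>. e * f \<in> \<Lambda>)) \<and>
     coxeter_system S \<and>
     (\<forall>e1 \<in> idems. \<forall>e2 \<in> idems. idem_le e1 e2 \<longrightarrow>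
        (\<exists>w \<in> units. \<exists>f1 \<in> \<Lambda>. \<exists>f2 \<in> \<Lambda>. idem_le f1 f2 \<and>
            w * f1 * ginv w = e1 \<and> w * f2 * ginv w = e2)) \<and>
     (\<forall>e \<in> \<Lambda>. (\<exists>I \<subseteq> S. Wc e = subgen I) \<and> (\<exists>I \<subseteq> S. Ws e = subgen I)) \<and>
     (\<forall>e \<in> \<Lambda>. \<forall>f \<in> \<Lambda>. idem_le e f \<longrightarrow> lam_up S e \<subseteq> lam_up S f)"

fun alt_word :: "'b \<Rightarrow> 'b \<Rightarrow> nat \<Rightarrow> 'b list" where
  "alt_word s t 0 = []"
| "alt_word s t (Suc n) = s # alt_word t s n"

definition cox1_rels :: "'a::monoid_mult set \<Rightarrow> ('a list \<times> 'a list) set" where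
  "cox1_rels S = {([s, s], []) | s. s \<in> S}"

definition cox2_rels :: "'a::monoid_mult set \<Rightarrow> ('a list \<times> 'a list) set" where
  "cox2_rels S = {(alt_word s t m, alt_word t s m) | s t m.
      s \<in> S \<and> t \<in> S \<and> s \<noteq> t \<and> has_order (s * t) m}"

definition ren1_rels :: "'a::monoid_mult set \<Rightarrow> 'a set \<Rightarrow> ('a list \<times> 'a list) set" where
  "ren1_rels \<Lambda> S = {([s, e], [e, s]) | s e. e \<in> \<Lambda> - {1} \<and> s \<in> lam_up S e}"

definition ren2_rels :: "'a::monoid_mult set \<Rightarrow> 'a set \<Rightarrow> ('a list \<times> 'a list) set" where
  "ren2_rels \<Lambda> S = {([s, e], [e]) | s e. e \<in> \<Lambda> - {1} \<and> s \<in> lam_low S e}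
                  \<union> {([e, s], [e]) | s e. e \<in> \<Lambda> - {1} \<and> s \<in> lam_low S e}"

text \<open>REN3: e w f = e \<and>_w f, where the right-hand side is the generator e * w * f.\<close>

definition ren3_rels :: "'a::monoid_mult set \<Rightarrow> 'a set \<Rightarrow> ('a \<Rightarrow> 'a list) \<Rightarrow> ('a list \<times> 'a list) set" where
  "ren3_rels \<Lambda> S rw = {(e # rw w @ [f], [e * w * f]) | e f w.
      e \<in> \<Lambda> - {1} \<and> f \<in> \<Lambda> - {1} \<and> w \<in> Red S e f}"

end

theory Submission
  imports Defs
begin


section \<open>Units\<close>

lemma ginv_unique:
  fixes x y :: "'a::monoid_mult"
  assumes "x*y=1" "y*x=1" shows "ginv x = y"
proof -
  have u: "z = y" if h: "x*z=1 \<and> z*x=1" for z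
  proof -
    have "z = (y*x)*z" using assms by simp
    also have "\<dots> = y*(x*z)" by (simp add: mult.assoc)
    also have "\<dots> = y" using h by simp
    finally show "z = y" .
  qed
  show ?thesis unfolding ginv_def using assms by (intro the_equality) (auto intro: u)
qed

lemma unitsI: "(x::'a::monoid_mult)*y=1 \<Longrightarrow> y*x=1 \<Longrightarrow> x \<in> units"
  unfolding units_def by auto

lemma units_inv:
  assumes "(x::'a::monoid_mult) \<in> units"
  shows "x * ginv x = 1" "ginv x * x = 1"
proof -
  obtain y where "x*y=1" "y*x=1" using assms unfolding units_def by auto
  then have "ginv x = y" by (rule ginv_unique)
  then show "x * ginv x = 1" "ginv x * x = 1" using \<open>x*y=1\<close> \<open>y*x=1\<close> by auto
qed

lemma ginv_units: "(x::'a::monoid_mult) \<in> units \<Longrightarrow> ginv x \<in> units"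
  using units_inv unitsI by metis

lemma one_units[simp]: "(1::'a::monoid_mult) \<in> units"
  by (rule unitsI[of 1 1]) simp_all

lemma ginv_one[simp]: "ginv (1::'a::monoid_mult) = 1"
  by (rule ginv_unique) simp_all

lemma units_mult:
  assumes "(x::'a::monoid_mult) \<in> units" "y \<in> units" shows "x*y \<in> units"
proof (rule unitsI[of _ "ginv y * ginv x"])
  have "x*y*(ginv y * ginv x) = x*(y*ginv y)*ginv x" by (simp add: mult.assoc)
  then show "x*y*(ginv y * ginv x) = 1" by (simp add: units_inv assms)
  have "ginv y * ginv x * (x*y) = ginv y*(ginv x*x)*y" by (simp add: mult.assoc)
  then show "ginv y * ginv x * (x*y) = 1" by (simp add: units_inv assms)
qed

lemma ginv_mult:
  assumes "(x::'a::monoid_mult) \<in> units" "y \<in> units" shows "ginv (x*y) = ginv y * ginv x"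
proof (rule ginv_unique)
  have "x*y*(ginv y * ginv x) = x*(y*ginv y)*ginv x" by (simp add: mult.assoc)
  then show "x*y*(ginv y * ginv x) = 1" by (simp add: units_inv assms)
  have "ginv y * ginv x * (x*y) = ginv y*(ginv x*x)*y" by (simp add: mult.assoc)
  then show "ginv y * ginv x * (x*y) = 1" by (simp add: units_inv assms)
qed

lemma ginv_ginv: "(x::'a::monoid_mult) \<in> units \<Longrightarrow> ginv (ginv x) = x"
  by (rule ginv_unique) (simp_all add: units_inv)

lemma cancel_left: "(x::'a::monoid_mult) \<in> units \<Longrightarrow> x*a = x*b \<Longrightarrow> a = b"
  by (metis mult.assoc mult_1 units_inv(2))

lemma cancel_right: "(x::'a::monoid_mult) \<in> units \<Longrightarrow> a*x = b*x \<Longrightarrow> a = b"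
  by (metis mult.assoc mult_1_right units_inv(1))

lemma idem_right_inv: "(e::'a::monoid_mult)*e = e \<Longrightarrow> e*z = 1 \<Longrightarrow> e = 1"
  by (metis mult.assoc mult_1_right)

lemma idem_unit: "(e::'a::monoid_mult)*e = e \<Longrightarrow> e \<in> units \<Longrightarrow> e = 1"
  using idem_right_inv units_inv(1) by blast

lemma conj_eq_iff:
  assumes "(u::'a::monoid_mult) \<in> units"
  shows "u * a * ginv u = b \<longleftrightarrow> u * a = b * u"
  by (metis assms cancel_right mult.assoc mult_1_right units_inv(2))

section \<open>Congruences\<close>

lemma onestep_ctx: "(u,v) \<in> onestep R \<Longrightarrow> (p@u@q, p@v@q) \<in> onestep R"
  unfolding onestep_def by clarsimp (metis append.assoc)

lemma wcong_refl[simp]: "(u,u) \<in> wcong R"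
  unfolding wcong_def by simp

lemma wcong_trans: "(u,v) \<in> wcong R \<Longrightarrow> (v,w) \<in> wcong R \<Longrightarrow> (u,w) \<in> wcong R"
  unfolding wcong_def by simp

lemma wcong_sym: "(u,v) \<in> wcong R \<Longrightarrow> (v,u) \<in> wcong R"
  unfolding wcong_def
proof -
  assume "(u,v) \<in> (onestep R \<union> (onestep R)\<inverse>)\<^sup>*"
  then have "(v,u) \<in> ((onestep R \<union> (onestep R)\<inverse>)\<inverse>)\<^sup>*" by (simp add: rtrancl_converse)
  moreover have "(onestep R \<union> (onestep R)\<inverse>)\<inverse> = onestep R \<union> (onestep R)\<inverse>" by auto
  ultimately show "(v,u) \<in> (onestep R \<union> (onestep R)\<inverse>)\<^sup>*" by simp
qed

lemma wcong_ctx: "(u,v) \<in> wcong R \<Longrightarrow> (p@u@q, p@v@q) \<in> wcong R"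
  unfolding wcong_def
proof (induction rule: rtrancl_induct)
  case base then show ?case by simp
next
  case (step y z)
  then have "(p@y@q, p@z@q) \<in> onestep R \<union> (onestep R)\<inverse>" using onestep_ctx by blast
  with step.IH show ?case by (meson rtrancl.rtrancl_into_rtrancl)
qed

lemma wcong_app: "(u,v) \<in> wcong R \<Longrightarrow> (u',v') \<in> wcong R \<Longrightarrow> (u@u', v@v') \<in> wcong R"
  using wcong_ctx[of u v R "[]" u'] wcong_ctx[of u' v' R v "[]"] wcong_trans by fastforce

lemma wcong_rel: "(l,r) \<in> R \<Longrightarrow> (l,r) \<in> wcong R"
proof -
  assume "(l,r) \<in> R"
  then have "([]@l@[], []@r@[]) \<in> onestep R" unfolding onestep_def by blast
  then show ?thesis unfolding wcong_def by auto
qed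

lemma wcong_mono:
  assumes "R \<subseteq> wcong R'" shows "wcong R \<subseteq> wcong R'"
proof -
  have "onestep R \<subseteq> wcong R'"
  proof
    fix x assume "x \<in> onestep R"
    then obtain p l r q where "x = (p@l@q, p@r@q)" "(l,r) \<in> R" unfolding onestep_def by blast
    then show "x \<in> wcong R'" using assms wcong_ctx by blast
  qed
  then have "onestep R \<union> (onestep R)\<inverse> \<subseteq> wcong R'" using wcong_sym by blast
  then have "(onestep R \<union> (onestep R)\<inverse>)\<^sup>* \<subseteq> (wcong R')\<^sup>*" by (rule rtrancl_mono)
  then show ?thesis unfolding wcong_def by simp
qed

lemma wcong_sound:
  assumes "\<forall>(l,r)\<in>R. prod_list l = prod_list (r::'a::monoid_mult list)"
    and "(u,v) \<in> wcong R"
  shows "prod_list u = prod_list v"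
proof -
  have os: "prod_list a = prod_list b" if "(a,b) \<in> onestep R" for a b
    using that assms(1) unfolding onestep_def by (auto simp: mult.assoc)
  from assms(2) show ?thesis unfolding wcong_def
    by (induction rule: rtrancl_induct) (auto dest: os)
qed



section \<open>Coxeter systems\<close>

fun refls :: "'a::monoid_mult list \<Rightarrow> 'a list" where
  "refls [] = []"
| "refls (s#u) = s # map (\<lambda>t. s*t*s) (refls u)"

lemma length_refls[simp]: "length (refls u) = length u"
  by (induction u) auto

lemma refls_append:
  "refls (p@q) = refls p @ map (\<lambda>t. prod_list p * t * prod_list (rev p)) (refls q)"
  by (induction p) (auto simp: mult.assoc)

lemma refls_nth:
  "i < length u \<Longrightarrow> refls u ! i = prod_list (take i u) * u!i * prod_list (rev (take i u))"
proof (induction u arbitrary: i)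
  case Nil then show ?case by simp
next
  case (Cons s u)
  then show ?case by (cases i) (auto simp: mult.assoc)
qed

lemma refls_alt:
  "refls (concat (replicate k [s,t])) = map (\<lambda>i. (s*t)^i * s) [0..<2*k]"
proof (induction k)
  case 0 then show ?case by simp
next
  case (Suc k)
  have up: "[0..<2*Suc k] = 0 # 1 # map (\<lambda>i. i + 2) [0..<2*k]"
  proof -
    have "[0..<2*Suc k] = [0..<2] @ [2..<2*k+2]" using upt_add_eq_append[of 0 2 "2*k"] by (simp add: add.commute)
    also have "[2..<2*k+2] = map (\<lambda>i. i + 2) [0..<2*k]" by (simp only: map_add_upt)
    also have "[0..<2] = [0,1::nat]" by (simp add: upt_rec)
    finally show ?thesis by simp
  qed
  have "s*(t*((s*t)^i*s)*t)*s = (s*t)^(i+2)*s" for i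
  proof -
    have "s*(t*((s*t)^i*s)*t)*s = (s*t)*(s*t)^i*(s*t)*s" by (simp add: mult.assoc)
    also have "\<dots> = (s*t)^(i+2)*s"
      by (metis add_2_eq_Suc' power_Suc power_Suc2 mult.assoc)
    finally show ?thesis .
  qed
  note key = this
  have "refls (concat (replicate (Suc k) [s,t])) = s # (s*t*s) # map (\<lambda>x. s*(t*x*t)*s) (refls (concat (replicate k [s,t])))"
    by (simp add: mult.assoc)
  also have "\<dots> = s # (s*t*s) # map (\<lambda>i. (s*t)^(i+2)*s) [0..<2*k]" using Suc key by simp
  also have "\<dots> = map (\<lambda>i. (s*t)^i * s) (0 # 1 # map (\<lambda>i. i + 2) [0..<2*k])" by simp
  also have "\<dots> = map (\<lambda>i. (s*t)^i * s) [0..<2*Suc k]" by (subst up) (rule refl)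
  finally show ?case .
qed

lemma prod_alt: "prod_list (concat (replicate k [s,t])) = ((s::'a::monoid_mult)*t)^k"
  by (induction k) (auto simp: mult.assoc power_commutes)

lemma rev_alt: "rev (concat (replicate k [s,t])) = concat (replicate k [t,s])"
proof (induction k)
  case 0 then show ?case by simp
next
  case (Suc k)
  have "concat (replicate (Suc k) [t,s]) = concat (replicate k [t,s]) @ [t,s]"
    by (metis concat.simps(2) concat_append concat.simps(1) append_Nil2 replicate_Suc replicate_append_same)
  then show ?case using Suc by simp
qed

lemma power_shift: "(a::'a::monoid_mult)*(b*a)^n = (a*b)^n*a"
  by (induction n) (auto simp: mult.assoc)

locale cox =
  fixes S :: "'a::monoid_mult set"
  assumes cs: "coxeter_system S"
begin

lemma S_units: "S \<subseteq> units" using cs unfolding coxeter_system_def by auto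

lemma gen_S: "x \<in> units \<Longrightarrow> \<exists>u\<in>lists S. prod_list u = x"
  using cs unfolding coxeter_system_def by auto

lemma pres: "u \<in> lists S \<Longrightarrow> v \<in> lists S \<Longrightarrow>
   prod_list u = prod_list v \<longleftrightarrow> (u,v) \<in> wcong (coxeter_rels S)"
  using cs unfolding coxeter_system_def by auto

lemma invol: "s \<in> S \<Longrightarrow> s*s = 1"
proof -
  assume s: "s \<in> S"
  then have "([s,s],[]) \<in> coxeter_rels S" unfolding coxeter_rels_def by auto
  then have "([s,s],[]) \<in> wcong (coxeter_rels S)" by (rule wcong_rel)
  then have "prod_list [s,s] = prod_list []" using pres[of "[s,s]" "[]"] s by simp
  then show ?thesis by simp
qed

lemma prod_rev:
  assumes "u \<in> lists S"
  shows "prod_list u * prod_list (rev u) = 1" "prod_list (rev u) * prod_list u = 1"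
  using assms
proof (induction u)
  case Nil
  { case 1 then show ?case by simp }
  { case 2 then show ?case by simp }
next
  case (Cons s u)
  { case 1
    have "prod_list (s#u) * prod_list (rev (s#u)) = s*(prod_list u * prod_list (rev u))*s"
      by (simp add: mult.assoc)
    then show ?case using Cons invol by simp }
  { case 2
    have "prod_list (rev (s#u)) * prod_list (s#u) = prod_list (rev u) * (s*s) * prod_list u"
      by (simp add: mult.assoc)
    then show ?case using Cons invol by simp }
qed

lemma prod_units: "u \<in> lists S \<Longrightarrow> prod_list u \<in> units"
  using prod_rev unitsI by blast

lemma ginv_prod: "u \<in> lists S \<Longrightarrow> ginv (prod_list u) = prod_list (rev u)"
  using prod_rev ginv_unique by blast

lemma S_ginv: "s \<in> S \<Longrightarrow> ginv s = s"
  using invol ginv_unique by blast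

lemma clen_le: "u \<in> lists S \<Longrightarrow> clen S (prod_list u) \<le> length u"
  unfolding clen_def by (rule Least_le) auto

lemma clen_ex: "x \<in> units \<Longrightarrow> \<exists>u\<in>lists S. length u = clen S x \<and> prod_list u = x"
proof -
  assume "x \<in> units"
  then obtain u where "u \<in> lists S" "prod_list u = x" using gen_S by blast
  then have "\<exists>n. \<exists>u\<in>lists S. length u = n \<and> prod_list u = x" by blast
  then show ?thesis unfolding clen_def by (rule LeastI_ex)
qed

definition odds :: "'a list \<Rightarrow> 'a set" where
  "odds u = {t. odd (count_list (refls u) t)}"

lemma odds_append_double:
  assumes "refls l = R @ R" "prod_list l = 1" "prod_list (rev l) = 1"
  shows "odds (p@l@q) = odds (p@q)"
proof -
  let ?c = "\<lambda>t. prod_list p * t * prod_list (rev p)"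
  have m: "map (\<lambda>t. prod_list l * t * prod_list (rev l)) (refls q) = refls q"
    using assms by simp
  have "refls (p@l@q) = refls p @ map ?c (R@R) @ map ?c (refls q)"
    using assms(1) m by (simp add: refls_append)
  moreover have "refls (p@q) = refls p @ map ?c (refls q)" by (simp add: refls_append)
  ultimately show ?thesis unfolding odds_def by auto
qed

lemma onestep_odds:
  assumes "(u,v) \<in> onestep (coxeter_rels S)" shows "odds u = odds v"
proof -
  obtain p l r q where uv: "u = p@l@q" "v = p@r@q" "(l,r) \<in> coxeter_rels S"
    using assms unfolding onestep_def by blast
  show ?thesis
  proof (cases "\<exists>s. l = [s,s] \<and> r = [] \<and> s \<in> S")
    case True
    then obtain s where s: "l = [s,s]" "r = []" "s \<in> S" by blast
    have a: "refls l = [s]@[s]" using s invol by (simp add: mult.assoc)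
    have b: "prod_list l = 1" "prod_list (rev l) = 1" using s invol by auto
    have "odds (p@l@q) = odds (p@q)" using odds_append_double[OF a b] .
    then show ?thesis using uv s by simp
  next
    case False
    then obtain s t m where st: "l = concat (replicate m [s,t])" "r = []" "s \<in> S" "t \<in> S"
      "has_order (s*t) m"
      using uv(3) unfolding coxeter_rels_def by blast
    have m1: "(s*t)^m = 1" "0 < m" using st(5) unfolding has_order_def by auto
    have p1: "prod_list l = 1" using st(1) m1 by (simp add: prod_alt)
    have "(t*s)^m = (t*s)^m * (t*t)" using invol st by simp
    also have "\<dots> = t*(s*t)^m*t" by (simp add: power_shift mult.assoc)
    also have "\<dots> = 1" using m1 invol st by simp
    finally have p2: "prod_list (rev l) = 1" using st(1) by (simp add: rev_alt prod_alt)
    let ?f = "\<lambda>i. (s*t)^i * s"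
    have "refls l = map ?f [0..<m+m]" using st(1) by (simp add: refls_alt mult_2)
    also have "\<dots> = map ?f [0..<m] @ map ?f [m..<m+m]" using upt_add_eq_append[of 0 m m] by simp
    also have "map ?f [m..<m+m] = map ?f [0..<m]"
    proof -
      have "map ?f [m..<m+m] = map ?f (map (\<lambda>i. i+m) [0..<m])"
        by (simp only: map_add_upt)
      also have "\<dots> = map (\<lambda>i. ?f (i+m)) [0..<m]" by simp
      also have "\<dots> = map ?f [0..<m]" using m1 by (simp add: power_add)
      finally show ?thesis .
    qed
    finally show ?thesis using uv st p1 p2 odds_append_double by simp
  qed
qed

lemma wcong_odds: "(u,v) \<in> wcong (coxeter_rels S) \<Longrightarrow> odds u = odds v"
  unfolding wcong_def
  by (induction rule: rtrancl_induct) (auto dest: onestep_odds)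

lemma prod_odds: "u \<in> lists S \<Longrightarrow> v \<in> lists S \<Longrightarrow> prod_list u = prod_list v \<Longrightarrow> odds u = odds v"
  using pres wcong_odds by blast

lemma S_not_one: "s \<in> S \<Longrightarrow> s \<noteq> 1"
proof
  assume "s \<in> S" "s = 1"
  then have "odds [s] = odds []" using prod_odds[of "[s]" "[]"] by simp
  moreover have "s \<in> odds [s]" "s \<notin> odds []" by (simp_all add: odds_def)
  ultimately show False by simp
qed

end


lemma not_distinct_pair: "\<not> distinct xs \<Longrightarrow> \<exists>i j. i < j \<and> j < length xs \<and> xs!i = xs!j"
  by (metis distinct_conv_nth linorder_neqE_nat)

lemma count_distinct: "distinct xs \<Longrightarrow> count_list xs x = (if x \<in> set xs then 1 else 0)"
  by (induction xs) auto

lemma del_one: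
  assumes "i < length (X@M@Y)"
  shows "\<exists>X' M' Y'. take i (X@M@Y) @ drop (Suc i) (X@M@Y) = X'@M'@Y' \<and> set X' \<subseteq> set X \<and>
     set M' \<subseteq> set M \<and> length M' \<le> length M \<and> set Y' \<subseteq> set Y"
proof (cases "i < length X")
  case True
  then show ?thesis
    by (intro exI[of _ "take i X @ drop (Suc i) X"] exI[of _ M] exI[of _ Y])
       (auto dest: in_set_takeD in_set_dropD)
next
  case False
  note F = this
  show ?thesis
  proof (cases "i < length X + length M")
    case True
    let ?j = "i - length X"
    have "take i (X@M@Y) @ drop (Suc i) (X@M@Y) = X @ (take ?j M @ drop (Suc ?j) M) @ Y"
      using F True by (simp add: Suc_diff_le)
    then show ?thesis
      by (intro exI[of _ X] exI[of _ "take ?j M @ drop (Suc ?j) M"] exI[of _ Y])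
         (auto dest: in_set_takeD in_set_dropD)
  next
    case False
    let ?j = "i - length X - length M"
    have "take i (X@M@Y) @ drop (Suc i) (X@M@Y) = X @ M @ (take ?j Y @ drop (Suc ?j) Y)"
      using F False by (simp add: Suc_diff_le)
    then show ?thesis
      by (intro exI[of _ X] exI[of _ M] exI[of _ "take ?j Y @ drop (Suc ?j) Y"])
         (auto dest: in_set_takeD in_set_dropD)
  qed
qed

lemma del_mid: "take (length p) (p@[w]@q) @ drop (Suc (length p)) (p@[w]@q) = p@q"
  by simp

context cox
begin

lemma odds_sub: "odds u \<subseteq> set (refls u)"
proof
  fix t assume "t \<in> odds u"
  then have o: "odd (count_list (refls u) t)" by (simp add: odds_def)
  have "count_list (refls u) t \<noteq> 0"
  proof
    assume "count_list (refls u) t = 0"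
    with o show False by simp
  qed
  then show "t \<in> set (refls u)" by (simp add: count_list_0_iff)
qed

lemma nonreduced_dup:
  assumes "u \<in> lists S" "clen S (prod_list u) < length u"
  shows "\<not> distinct (refls u)"
proof
  assume d: "distinct (refls u)"
  obtain v where v: "v \<in> lists S" "length v = clen S (prod_list u)" "prod_list v = prod_list u"
    using clen_ex[OF prod_units[OF assms(1)]] by blast
  have e: "odds u = odds v" using prod_odds[OF assms(1) v(1) v(3)[symmetric]] by simp
  have "odds u = set (refls u)" unfolding odds_def by (auto simp: count_distinct[OF d])
  then have "length u = card (odds u)" using distinct_card[OF d] by simp
  also have "\<dots> = card (odds v)" using e by simp
  also have "\<dots> \<le> card (set (refls v))" by (rule card_mono[OF finite_set odds_sub])
  also have "\<dots> \<le> length (refls v)" by (rule card_length)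
  finally show False using v assms by simp
qed

lemma del_alg:
  assumes ab: "a \<in> lists S" "b \<in> lists S" and xy: "x \<in> S" "y \<in> S"
    and eq: "prod_list a * x * prod_list (rev a) =
             prod_list (a@[x]@b) * y * prod_list (rev (a@[x]@b))"
  shows "x * prod_list b * y = prod_list b"
proof -
  let ?A = "prod_list a" and ?Ar = "prod_list (rev a)" and ?B = "prod_list b" and ?Br = "prod_list (rev b)"
  have "?A * x * ?Ar = ?A * (x*?B*y*?Br*x) * ?Ar" using eq by (simp add: mult.assoc)
  then have "?A * (x * ?Ar) = ?A * ((x*?B*y*?Br*x) * ?Ar)" by (simp add: mult.assoc)
  then have "x * ?Ar = (x*?B*y*?Br*x) * ?Ar" using cancel_left prod_units ab by blast
  moreover have "rev a \<in> lists S" using ab by auto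
  ultimately have e1: "x = x*?B*y*?Br*x" using cancel_right[OF prod_units] by blast
  have "1 = x * x" using invol xy by simp
  also have "\<dots> = x * (x*?B*y*?Br*x)" using e1 by simp
  also have "\<dots> = (x*x)*?B*y*?Br*x" by (simp add: mult.assoc)
  finally have "1 = ?B*y*?Br*x" using invol xy by simp
  then have "1*x = (?B*y*?Br*x)*x" by simp
  then have "x = ?B*y*?Br*(x*x)" by (simp add: mult.assoc)
  then have "x = ?B*y*?Br" using invol xy by simp
  then have "x * ?B = ?B*y*(?Br*?B)" by (simp add: mult.assoc)
  then have "x * ?B = ?B*y" using prod_rev ab by simp
  then have "x*?B*y = ?B*(y*y)" by (simp add: mult.assoc)
  then show ?thesis using invol xy by simp
qed

lemma deletion:
  assumes "u \<in> lists S" "clen S (prod_list u) < length u"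
  shows "\<exists>a x b y c. u = a@[x]@b@[y]@c \<and> prod_list (a@b@c) = prod_list u"
proof -
  obtain i j where ij: "i < j" "j < length (refls u)" "refls u ! i = refls u ! j"
    using not_distinct_pair[OF nonreduced_dup[OF assms]] by blast
  have ij2: "j < length u" "i < length u" using ij by simp_all
  define a where "a = take i u"
  define x where "x = u!i"
  define r where "r = drop (Suc i) u"
  define b where "b = take (j - Suc i) r"
  define y where "y = u!j"
  define c where "c = drop (Suc j) u"
  have u1: "u = a @ x # r" unfolding a_def x_def r_def by (rule id_take_nth_drop[OF ij2(2)])
  have lr: "j - Suc i < length r" unfolding r_def using ij ij2 by simp
  have r1: "r = b @ r!(j - Suc i) # drop (Suc (j - Suc i)) r" unfolding b_def by (rule id_take_nth_drop[OF lr])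
  have r2: "r!(j - Suc i) = y" unfolding r_def y_def using ij ij2 by simp
  have r3: "drop (Suc (j - Suc i)) r = c" unfolding r_def c_def using ij ij2 by simp
  have u2: "u = a@[x]@b@[y]@c" using u1 r1 r2 r3 by simp
  have la: "length a = i" unfolding a_def using ij2 by simp
  have lb: "length (a@[x]@b) = j" unfolding b_def r_def using la ij ij2 by simp
  have "set u \<subseteq> S" using assms(1) by auto
  then have sets: "a \<in> lists S" "b \<in> lists S" "c \<in> lists S" "x \<in> S" "y \<in> S"
    unfolding u2 by auto
  have t2: "take j u = a@[x]@b"
  proof -
    have "take j u = take j ((a@[x]@b) @ ([y]@c))" using u2 by simp
    also have "\<dots> = a@[x]@b" using lb by (metis append_eq_conv_conj)
    finally show ?thesis .
  qed
  have "refls u ! i = prod_list a * x * prod_list (rev a)"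
    using refls_nth[OF ij2(2)] unfolding a_def[symmetric] x_def[symmetric] .
  moreover have "refls u ! j = prod_list (a@[x]@b) * y * prod_list (rev (a@[x]@b))"
    using refls_nth[OF ij2(1)] unfolding t2 y_def[symmetric] .
  ultimately have eq: "prod_list a * x * prod_list (rev a) = prod_list (a@[x]@b) * y * prod_list (rev (a@[x]@b))"
    using ij(3) by simp
  have "x * prod_list b * y = prod_list b" by (rule del_alg[OF sets(1) sets(2) sets(4) sets(5) eq])
  moreover have "prod_list (a@[x]@b@[y]@c) = prod_list a * (x * prod_list b * y) * prod_list c"
    by (simp add: mult.assoc)
  ultimately have "prod_list (a@b@c) = prod_list (a@[x]@b@[y]@c)" by (simp add: mult.assoc)
  then show ?thesis using u2 by metis
qed

lemma reduce3:
  assumes "X \<in> lists S" "M \<in> lists S" "Y \<in> lists S"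
  shows "\<exists>X' M' Y'. set X' \<subseteq> set X \<and> set M' \<subseteq> set M \<and> length M' \<le> length M \<and> set Y' \<subseteq> set Y \<and>
    prod_list (X'@M'@Y') = prod_list (X@M@Y) \<and> length (X'@M'@Y') = clen S (prod_list (X'@M'@Y'))"
  using assms
proof (induction "length (X@M@Y)" arbitrary: X M Y rule: less_induct)
  case less
  show ?case
  proof (cases "length (X@M@Y) = clen S (prod_list (X@M@Y))")
    case True
    then show ?thesis by blast
  next
    case False
    have XMY: "X@M@Y \<in> lists S" using less.prems by simp
    then have "clen S (prod_list (X@M@Y)) < length (X@M@Y)" using clen_le[OF XMY] False
      by (simp add: order_less_le)
    then obtain a x b y c where u: "X@M@Y = a@[x]@b@[y]@c" "prod_list (a@b@c) = prod_list (X@M@Y)"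
      using deletion XMY by blast
    obtain X1 M1 Y1 where d1: "take (length a) (X@M@Y) @ drop (Suc (length a)) (X@M@Y) = X1@M1@Y1"
      "set X1 \<subseteq> set X" "set M1 \<subseteq> set M" "length M1 \<le> length M" "set Y1 \<subseteq> set Y"
      using del_one[of "length a" X M Y] u by (metis length_append less_add_Suc1 append.simps(2) append_Nil add_Suc_right length_Cons)
    have e1: "X1@M1@Y1 = (a@b)@[y]@c" using d1(1) u(1) by (metis append.assoc del_mid)
    obtain X2 M2 Y2 where d2: "take (length (a@b)) (X1@M1@Y1) @ drop (Suc (length (a@b))) (X1@M1@Y1) = X2@M2@Y2"
      "set X2 \<subseteq> set X1" "set M2 \<subseteq> set M1" "length M2 \<le> length M1" "set Y2 \<subseteq> set Y1"
      using del_one[of "length (a@b)" X1 M1 Y1] e1 by (metis length_append less_add_Suc1 append.simps(2) append_Nil add_Suc_right length_Cons)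
    have e2: "X2@M2@Y2 = a@b@c" using d2(1) e1 by (metis append.assoc del_mid)
    have len: "length (X2@M2@Y2) < length (X@M@Y)" using e2 u(1) by simp
    have ls: "X2 \<in> lists S" "M2 \<in> lists S" "Y2 \<in> lists S" using less.prems d1 d2 by auto
    from less.hyps[OF len ls] obtain X' M' Y' where
      r: "set X' \<subseteq> set X2" "set M' \<subseteq> set M2" "length M' \<le> length M2" "set Y' \<subseteq> set Y2"
       "prod_list (X'@M'@Y') = prod_list (X2@M2@Y2)" "length (X'@M'@Y') = clen S (prod_list (X'@M'@Y'))"
      by blast
    show ?thesis
      apply (rule exI[of _ X'], rule exI[of _ M'], rule exI[of _ Y'])
      using r d1 d2 e2 u(2) by auto
  qed
qed

end


lemma words_subgen: "V \<in> lists I \<Longrightarrow> prod_list V \<in> subgen I"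
proof (induction V)
  case Nil then show ?case by (simp add: subgen.one)
next
  case (Cons s V) then show ?case by (simp add: subgen.mult subgen.gen)
qed

lemma subgen_mono: assumes "I \<subseteq> J" shows "x \<in> subgen I \<Longrightarrow> x \<in> subgen J"
proof (induction rule: subgen.induct)
  case one then show ?case by (rule subgen.one)
next
  case (gen x) then show ?case using assms by (simp add: subgen.gen subset_iff)
next
  case (mult x y) then show ?case by (simp add: subgen.mult)
next
  case (inv x) then show ?case by (simp add: subgen.inv)
qed

context cox
begin

lemma subgen_words: assumes IS: "I \<subseteq> S" shows "x \<in> subgen I \<Longrightarrow> \<exists>V\<in>lists I. prod_list V = x"
proof (induction rule: subgen.induct)
  case one then show ?case by (intro bexI[of _ "[]"]) auto
next
  case (gen x) then show ?case by (intro bexI[of _ "[x]"]) auto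
next
  case (mult x y)
  then obtain V W where "V \<in> lists I" "prod_list V = x" "W \<in> lists I" "prod_list W = y" by blast
  then show ?case by (intro bexI[of _ "V@W"]) auto
next
  case (inv x)
  then obtain V where V: "V \<in> lists I" "prod_list V = x" by blast
  then have "V \<in> lists S" using IS by auto
  then have "ginv x = prod_list (rev V)" using ginv_prod V(2) by blast
  then show ?case using V by (intro bexI[of _ "rev V"]) auto
qed

lemma subgen_units: "I \<subseteq> S \<Longrightarrow> x \<in> subgen I \<Longrightarrow> x \<in> units"
proof -
  assume a: "I \<subseteq> S" "x \<in> subgen I"
  then obtain V where "V \<in> lists I" "prod_list V = x" using subgen_words by blast
  moreover then have "V \<in> lists S" using a by auto
  ultimately show ?thesis using prod_units by blast
qed

lemma reduced_word: "I \<subseteq> S \<Longrightarrow> x \<in> subgen I \<Longrightarrow>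
   \<exists>V\<in>lists I. prod_list V = x \<and> length V = clen S x"
proof -
  assume I: "I \<subseteq> S" "x \<in> subgen I"
  then obtain V where V: "V \<in> lists I" "prod_list V = x" using subgen_words by blast
  then have "V \<in> lists S" using I by auto
  from reduce3[of "[]" V "[]", OF _ this] obtain X' M' Y' where
    r: "set X' \<subseteq> set []" "set M' \<subseteq> set V" "set Y' \<subseteq> set []"
    "prod_list (X'@M'@Y') = prod_list ([]@V@[])" "length (X'@M'@Y') = clen S (prod_list (X'@M'@Y'))"
    by auto
  then have "X' = []" "Y' = []" by auto
  with r have "set M' \<subseteq> set V" "prod_list M' = prod_list V" "length M' = clen S (prod_list M')" by auto
  then show ?thesis using V by (intro bexI[of _ M']) auto
qed

lemma clen_S: "s \<in> S \<Longrightarrow> clen S s = 1"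
proof -
  assume s: "s \<in> S"
  have "clen S s \<le> 1" using clen_le[of "[s]"] s by simp
  moreover have "clen S s \<noteq> 0"
  proof
    assume "clen S s = 0"
    moreover have "s \<in> units" using s S_units by auto
    ultimately obtain u where "u \<in> lists S" "length u = 0" "prod_list u = s" using clen_ex by metis
    then show False using S_not_one[OF s] by simp
  qed
  ultimately show ?thesis by simp
qed

lemma S_in_subgen: "K \<subseteq> S \<Longrightarrow> s \<in> S \<Longrightarrow> s \<in> subgen K \<Longrightarrow> s \<in> K"
proof -
  assume a: "K \<subseteq> S" "s \<in> S" "s \<in> subgen K"
  then obtain V where "V \<in> lists K" "prod_list V = s" "length V = clen S s"
    using reduced_word[OF a(1) a(3)] by blast
  then have "V \<in> lists K" "prod_list V = s" "length V = 1" using clen_S[OF a(2)] by auto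
  then show ?thesis by (cases V) auto
qed

lemma reduced_in:
  assumes "K \<subseteq> S"
  shows "u \<in> lists S \<Longrightarrow> prod_list u \<in> subgen K \<Longrightarrow> length u = clen S (prod_list u) \<Longrightarrow> set u \<subseteq> K"
proof (induction u rule: rev_induct)
  case Nil then show ?case by simp
next
  case (snoc s u')
  let ?d = "prod_list (u'@[s])"
  have s: "s \<in> S" and u'S: "u' \<in> lists S" using snoc.prems by auto
  obtain V where V: "V \<in> lists K" "prod_list V = ?d" "length V = clen S ?d"
    using reduced_word[OF assms snoc.prems(2)] by blast
  have VS: "V \<in> lists S" using V assms by auto
  have pu': "prod_list (V@[s]) = prod_list u'" using V invol s by (simp add: mult.assoc)
  have "clen S (prod_list u') \<le> length u'" using clen_le u'S by simp
  then have "clen S (prod_list (V@[s])) < length (V@[s])" using pu' V snoc.prems by simp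
  moreover have "V@[s] \<in> lists S" using VS s by simp
  ultimately obtain a x b y c where d: "V@[s] = a@[x]@b@[y]@c" "prod_list (a@b@c) = prod_list (V@[s])"
    using deletion by blast
  have ab: "prod_list (a@b) = prod_list u' \<and> a@b \<in> lists K"
  proof (cases "c = []")
    case True
    then have "V = a@[x]@b" "y = s" using d(1) by auto
    then show ?thesis using d pu' V(1) True by auto
  next
    case False
    then obtain c' z where c'z: "c = c'@[z]" by (metis rev_exhaust)
    then have "z = s" using d(1) by (metis append_assoc last_snoc)
    then have c': "c = c'@[s]" using c'z by simp
    then have V2: "V = a@[x]@b@[y]@c'" using d(1) by simp
    have "prod_list (a@b@c') * s = prod_list V * s" using d c' by (simp add: mult.assoc)
    moreover have "s \<in> units" using S_units s by auto
    ultimately have "prod_list (a@b@c') = prod_list V" using cancel_right by blast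
    moreover have "a@b@c' \<in> lists S" using V2 VS by auto
    ultimately have "clen S ?d \<le> length (a@b@c')" using clen_le[of "a@b@c'"] V(2) by simp
    then show ?thesis using V V2 by simp
  qed
  have red': "length u' = clen S (prod_list u')"
  proof (rule ccontr)
    assume "length u' \<noteq> clen S (prod_list u')"
    then have lt: "clen S (prod_list u') < length u'" using clen_le[OF u'S] by simp
    obtain w where w: "w \<in> lists S" "length w = clen S (prod_list u')" "prod_list w = prod_list u'"
      using clen_ex[OF prod_units[OF u'S]] by blast
    have "prod_list (w@[s]) = ?d" using w by simp
    moreover have "w@[s] \<in> lists S" using w s by simp
    ultimately have "clen S ?d \<le> length (w@[s])" using clen_le[of "w@[s]"] by simp
    then show False using lt w snoc.prems by simp
  qed
  have pK: "prod_list u' \<in> subgen K" using ab words_subgen[of "a@b" K] by simp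
  have IH: "set u' \<subseteq> K" using snoc.IH[OF u'S pK red'] .
  have "s = ginv (prod_list u') * ?d"
    using u'S units_inv(2)[OF prod_units[OF u'S]] by (simp add: mult.assoc[symmetric])
  moreover have "ginv (prod_list u') * ?d \<in> subgen K" using pK snoc.prems(2) by (simp add: subgen.mult subgen.inv)
  ultimately have "s \<in> subgen K" by simp
  then have "s \<in> K" using S_in_subgen[OF assms s] by blast
  then show ?case using IH by simp
qed

lemma coset_reduce:
  assumes IJK: "I \<subseteq> S" "J \<subseteq> S" "K \<subseteq> S"
    and x1: "x1 \<in> subgen I" and y1: "y1 \<in> subgen J" and w0: "w0 \<in> units"
    and b: "x1 * w0 * y1 \<in> subgen K"
  shows "\<exists>x w y. x1 * w0 * y1 = x * w * y \<and> x \<in> subgen I \<and> x \<in> subgen K \<and>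
     y \<in> subgen J \<and> y \<in> subgen K \<and> w \<in> units \<and> clen S w \<le> clen S w0"
proof -
  obtain X where X: "X \<in> lists I" "prod_list X = x1" using subgen_words[OF IJK(1) x1] by blast
  obtain Y where Y: "Y \<in> lists J" "prod_list Y = y1" using subgen_words[OF IJK(2) y1] by blast
  obtain M where M: "M \<in> lists S" "length M = clen S w0" "prod_list M = w0" using clen_ex[OF w0] by blast
  have XY: "X \<in> lists S" "Y \<in> lists S" using X Y IJK by auto
  from reduce3[OF XY(1) M(1) XY(2)] obtain X' M' Y' where
    r: "set X' \<subseteq> set X" "set M' \<subseteq> set M" "length M' \<le> length M" "set Y' \<subseteq> set Y"
       "prod_list (X'@M'@Y') = prod_list (X@M@Y)" "length (X'@M'@Y') = clen S (prod_list (X'@M'@Y'))"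
    by blast
  have pb: "prod_list (X'@M'@Y') = x1 * w0 * y1" using r(5) X Y M by (simp add: mult.assoc)
  have inS: "X'@M'@Y' \<in> lists S" using r XY M by auto
  have "set (X'@M'@Y') \<subseteq> K" using reduced_in[OF IJK(3) inS] pb b r(6) by simp
  then have X'K: "X' \<in> lists (I \<inter> K)" and Y'K: "Y' \<in> lists (J \<inter> K)" using r X Y by auto
  have M'S: "M' \<in> lists S" using r M by auto
  show ?thesis
  proof (intro exI conjI)
    show "x1 * w0 * y1 = prod_list X' * prod_list M' * prod_list Y'" using pb by (simp add: mult.assoc)
    have "X' \<in> lists I" "X' \<in> lists K" using X'K by auto
    then show "prod_list X' \<in> subgen I" "prod_list X' \<in> subgen K" using words_subgen by auto
    have "Y' \<in> lists J" "Y' \<in> lists K" using Y'K by auto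
    then show "prod_list Y' \<in> subgen J" "prod_list Y' \<in> subgen K" using words_subgen by auto
    show "prod_list M' \<in> units" using prod_units M'S by simp
    show "clen S (prod_list M') \<le> clen S w0" using clen_le[OF M'S] r(3) M(2) by simp
  qed
qed

end


lemma comm_step: "(a::'a::monoid_mult)*b = b*a \<Longrightarrow> a*(b*x) = b*(a*x)"
  by (metis mult.assoc)

locale rc = cox S for S :: "'a::monoid_mult set" +
  fixes L :: "'a set"
  assumes grc: "gen_renner_coxeter L S"
begin

lemma grc_fact: "factorisable TYPE('a)"
  using grc unfolding gen_renner_coxeter_def by (elim conjE) assumption
lemma L_idems: "L \<subseteq> idems"
  using grc unfolding gen_renner_coxeter_def by (elim conjE) assumption
lemma L_uniq_all: "\<forall>e \<in> idems. \<exists>!f. f \<in> L \<and> (\<exists>w \<in> units. w * f * ginv w = e)"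
  using grc unfolding gen_renner_coxeter_def by (elim conjE) assumption
lemma L_mult: "\<forall>e \<in> L. \<forall>f \<in> L. e * f \<in> L"
  using grc unfolding gen_renner_coxeter_def by (elim conjE) assumption
lemma ecs4_all: "\<forall>e1 \<in> idems. \<forall>e2 \<in> idems. idem_le e1 e2 \<longrightarrow>
        (\<exists>w \<in> units. \<exists>f1 \<in> L. \<exists>f2 \<in> L. idem_le f1 f2 \<and>
            w * f1 * ginv w = e1 \<and> w * f2 * ginv w = e2)"
  using grc unfolding gen_renner_coxeter_def by (elim conjE) assumption
lemma ecs5_all: "\<forall>e \<in> L. (\<exists>I \<subseteq> S. Wc e = subgen I) \<and> (\<exists>I \<subseteq> S. Ws e = subgen I)"
  using grc unfolding gen_renner_coxeter_def by (elim conjE) assumption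
lemma ecs6_all: "\<forall>e \<in> L. \<forall>f \<in> L. idem_le e f \<longrightarrow> lam_up S e \<subseteq> lam_up S f"
  using grc unfolding gen_renner_coxeter_def by (elim conjE) assumption

lemma fact_ge: "\<exists>e g. (x::'a) = g*e \<and> e \<in> idems \<and> g \<in> units"
proof -
  have eq: "(UNIV::'a set) = {g * e | e g. e \<in> idems \<and> g \<in> units}"
    using grc_fact unfolding factorisable_def by (elim conjE) assumption
  have "x \<in> {g * e | e g. e \<in> idems \<and> g \<in> units}" using eq by (metis UNIV_I)
  then show ?thesis by blast
qed

lemma idem_comm: assumes "(e::'a) \<in> idems" "f \<in> idems" shows "e*f = f*e"
  using grc_fact assms unfolding factorisable_def by blast

lemma L_uniq: "e \<in> idems \<Longrightarrow> \<exists>!f. f \<in> L \<and> (\<exists>w\<in>units. w*f*ginv w = e)"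
  by (rule bspec[OF L_uniq_all])

lemma ecs4: "e1 \<in> idems \<Longrightarrow> e2 \<in> idems \<Longrightarrow> idem_le e1 e2 \<Longrightarrow>
  \<exists>w\<in>units. \<exists>f1\<in>L. \<exists>f2\<in>L. idem_le f1 f2 \<and> w*f1*ginv w = e1 \<and> w*f2*ginv w = e2"
  by (rule mp[OF bspec[OF bspec[OF ecs4_all]]])

lemma ecs5: "e \<in> L \<Longrightarrow> (\<exists>I\<subseteq>S. Wc e = subgen I) \<and> (\<exists>I\<subseteq>S. Ws e = subgen I)"
  by (rule bspec[OF ecs5_all])

lemma ecs6: "e \<in> L \<Longrightarrow> f \<in> L \<Longrightarrow> idem_le e f \<Longrightarrow> lam_up S e \<subseteq> lam_up S f"
  by (rule mp[OF bspec[OF bspec[OF ecs6_all]]])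

lemma lam_spec: "e \<in> L \<Longrightarrow> lam S e \<subseteq> S \<and> Wc e = subgen (lam S e)"
proof -
  assume "e \<in> L"
  then have "\<exists>I. I \<subseteq> S \<and> Wc e = subgen I" using ecs5 by blast
  then show ?thesis unfolding lam_def by (rule someI_ex)
qed

lemma lam_low_spec: "e \<in> L \<Longrightarrow> lam_low S e \<subseteq> S \<and> Ws e = subgen (lam_low S e)"
proof -
  assume "e \<in> L"
  then have "\<exists>I. I \<subseteq> S \<and> Ws e = subgen I" using ecs5 by blast
  then show ?thesis unfolding lam_low_def by (rule someI_ex)
qed

lemma conj_idem: "w \<in> units \<Longrightarrow> e \<in> idems \<Longrightarrow> w*e*ginv w \<in> idems"
proof -
  assume w: "w \<in> units" and e: "e \<in> idems"
  have "w*e*ginv w*(w*e*ginv w) = w*e*(ginv w*w)*e*ginv w" by (simp add: mult.assoc)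
  also have "\<dots> = w*(e*e)*ginv w" using units_inv(2)[OF w] by (simp add: mult.assoc)
  also have "\<dots> = w*e*ginv w" using e unfolding idems_def by simp
  finally show ?thesis unfolding idems_def by simp
qed

lemma uniq_conj:
  assumes "f1 \<in> L" "f2 \<in> L" "w1 \<in> units" "w2 \<in> units" "w1*f1*ginv w1 = w2*f2*ginv w2"
  shows "f1 = f2"
proof -
  let ?e = "w1*f1*ginv w1"
  have "f1 \<in> idems" using assms(1) L_idems by blast
  then have "?e \<in> idems" using conj_idem[OF assms(3)] by blast
  from L_uniq[OF this] obtain z where z: "z \<in> L \<and> (\<exists>w\<in>units. w*z*ginv w = ?e)"
    "\<And>y. y \<in> L \<and> (\<exists>w\<in>units. w*y*ginv w = ?e) \<Longrightarrow> y = z" by (elim ex1E) blast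
  have "f1 = z" using z(2)[of f1] assms(1,3) by blast
  moreover have "f2 = z" using z(2)[of f2] assms(2,4,5) by metis
  ultimately show ?thesis by simp
qed

lemma Wc_units: "w \<in> Wc e \<Longrightarrow> w \<in> units" unfolding Wc_def by simp
lemma Ws_units: "w \<in> Ws e \<Longrightarrow> w \<in> units" unfolding Ws_def by simp
lemma Wc_comm: "w \<in> Wc e \<Longrightarrow> w*e = e*w" unfolding Wc_def by simp
lemma Ws_fix: "w \<in> Ws e \<Longrightarrow> w*e = e" "w \<in> Ws e \<Longrightarrow> e*w = e" unfolding Ws_def by simp_all

lemma Wc_mult: "x \<in> Wc e \<Longrightarrow> y \<in> Wc e \<Longrightarrow> x*y \<in> Wc e"
proof -
  assume "x \<in> Wc e" "y \<in> Wc e"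
  then have u: "x \<in> units" "y \<in> units" and c: "x*e = e*x" "y*e = e*y" unfolding Wc_def by auto
  have "x*y*e = x*(y*e)" by (simp add: mult.assoc)
  also have "\<dots> = x*(e*y)" using c(2) by simp
  also have "\<dots> = (x*e)*y" by (simp add: mult.assoc)
  also have "\<dots> = (e*x)*y" using c(1) by simp
  also have "\<dots> = e*(x*y)" by (simp add: mult.assoc)
  finally show ?thesis using units_mult[OF u] unfolding Wc_def by simp
qed

lemma Wc_inv: "x \<in> Wc e \<Longrightarrow> ginv x \<in> Wc e"
proof -
  assume x: "x \<in> Wc e"
  then have xu: "x \<in> units" and c: "x*e = e*x" unfolding Wc_def by auto
  have "ginv x * e = ginv x * e * (x * ginv x)" using units_inv(1)[OF xu] by simp
  also have "\<dots> = ginv x * (x * e) * ginv x" using c by (simp add: mult.assoc)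
  also have "\<dots> = e * ginv x" using units_inv(2)[OF xu] by (simp add: mult.assoc[symmetric])
  finally show ?thesis using ginv_units[OF xu] unfolding Wc_def by simp
qed

lemma Ws_mult: "x \<in> Ws e \<Longrightarrow> y \<in> Ws e \<Longrightarrow> x*y \<in> Ws e"
proof -
  assume "x \<in> Ws e" "y \<in> Ws e"
  then have u: "x \<in> units" "y \<in> units" and c: "x*e = e" "y*e = e" "e*x = e" "e*y = e" unfolding Ws_def by auto
  have "x*y*e = e" using c by (simp add: mult.assoc)
  moreover have "e*(x*y) = e" using c by (simp add: mult.assoc[symmetric])
  ultimately show ?thesis using units_mult[OF u] unfolding Ws_def by simp
qed

lemma Ws_inv: "x \<in> Ws e \<Longrightarrow> ginv x \<in> Ws e"
proof -
  assume x: "x \<in> Ws e"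
  then have xu: "x \<in> units" and c: "x*e = e" "e*x = e" unfolding Ws_def by auto
  have "ginv x * e = ginv x * (x * e)" using c by simp
  also have "\<dots> = e" using units_inv(2)[OF xu] by (simp add: mult.assoc[symmetric])
  finally have 1: "ginv x * e = e" .
  have "e * ginv x = (e * x) * ginv x" using c by simp
  also have "\<dots> = e" using units_inv(1)[OF xu] by (simp add: mult.assoc)
  finally show ?thesis using 1 ginv_units[OF xu] unfolding Ws_def by simp
qed

lemma Ws_Wc: "x \<in> Ws e \<Longrightarrow> x \<in> Wc e" unfolding Ws_def Wc_def by auto

lemma decomp:
  assumes h: "h \<in> L" and ue: "lam_up S h \<subseteq> Wc e" and uf: "lam_up S h \<subseteq> Wc f"
  shows "T \<in> lists (lam S h) \<Longrightarrow> \<exists>a b. prod_list T = a*b \<and> a \<in> Wc e \<and> a \<in> Wc f \<and> a \<in> Wc h \<and> b \<in> Ws h"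
proof (induction T)
  case Nil
  have "(1::'a) \<in> Wc e" "(1::'a) \<in> Wc f" "(1::'a) \<in> Wc h" "(1::'a) \<in> Ws h" unfolding Wc_def Ws_def by auto
  then show ?case by (intro exI[of _ 1]) auto
next
  case (Cons s T)
  then obtain a b where ab: "prod_list T = a*b" "a \<in> Wc e" "a \<in> Wc f" "a \<in> Wc h" "b \<in> Ws h" by auto
  have sl: "s \<in> lam S h" using Cons.prems by simp
  then have sS: "s \<in> S" and sW: "s \<in> Wc h" using lam_spec[OF h] by (auto intro: subgen.gen)
  show ?case
  proof (cases "s*h = h")
    case True
    then have sWs: "s \<in> Ws h" using sW unfolding Wc_def Ws_def by auto
    let ?c = "ginv a * s * a"
    have "?c \<in> Ws h"
    proof -
      have au: "a \<in> units" using ab(4) Wc_units by blast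
      have ah: "a*h = h*a" using ab(4) Wc_comm by blast
      have iah: "ginv a * h = h * ginv a" using Wc_inv[OF ab(4)] Wc_comm by blast
      have "?c * h = ginv a * s * (a * h)" by (simp add: mult.assoc)
      also have "\<dots> = ginv a * (s * h) * a" using ah by (simp add: mult.assoc)
      also have "\<dots> = ginv a * h * a" using True by simp
      also have "\<dots> = h * (ginv a * a)" using iah by (simp add: mult.assoc)
      also have "\<dots> = h" using units_inv(2)[OF au] by simp
      finally have 1: "?c * h = h" .
      have "h * ?c = (h * ginv a) * s * a" by (simp add: mult.assoc)
      also have "\<dots> = ginv a * (h * s) * a" using iah by (simp add: mult.assoc comm_step[OF iah[symmetric]])
      also have "\<dots> = ginv a * h * a" using Ws_fix(2)[OF sWs] by simp
      also have "\<dots> = h * (ginv a * a)" using iah by (simp add: mult.assoc)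
      also have "\<dots> = h" using units_inv(2)[OF au] by simp
      finally have 2: "h * ?c = h" .
      have "?c \<in> units" using au sS S_units by (auto intro!: units_mult ginv_units)
      then show ?thesis using 1 2 unfolding Ws_def by simp
    qed
    moreover have "s * (a*b) = a * (?c * b)"
    proof -
      have au: "a \<in> units" using ab(4) Wc_units by blast
      have "a * (?c * b) = (a * ginv a) * s * a * b" by (simp add: mult.assoc)
      then show ?thesis using units_inv(1)[OF au] by (simp add: mult.assoc)
    qed
    ultimately show ?thesis using ab by (intro exI[of _ a] exI[of _ "?c * b"]) (auto intro: Ws_mult)
  next
    case False
    then have "s \<in> lam_up S h" using sS sW unfolding lam_up_def Wc_def by auto
    then have "s \<in> Wc e" "s \<in> Wc f" "s \<in> Wc h" using ue uf sW by auto
    then show ?thesis using ab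
      by (intro exI[of _ "s*a"] exI[of _ b]) (auto intro: Wc_mult simp: mult.assoc)
  qed
qed


lemma conj_inv_comm: "(w::'a) \<in> units \<Longrightarrow> a*w = w*b \<Longrightarrow> ginv w * a = b * ginv w"
proof -
  assume w: "w \<in> units" and c: "a*w = w*b"
  have "ginv w * a = ginv w * a * (w * ginv w)" using units_inv(1)[OF w] by simp
  also have "\<dots> = ginv w * (a * w) * ginv w" by (simp add: mult.assoc)
  also have "\<dots> = (ginv w * w) * b * ginv w" using c by (simp add: mult.assoc)
  also have "\<dots> = b * ginv w" using units_inv(2)[OF w] by simp
  finally show ?thesis .
qed

lemma lam_up_Wc: "lam_up S e \<subseteq> Wc e"
  unfolding lam_up_def Wc_def using S_units by auto

lemma KR:
  assumes eL: "e \<in> L" and e1: "e \<noteq> 1" and fL: "f \<in> L" and w0: "w0 \<in> units"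
  shows "\<exists>x1 y1 b h1. x1 \<in> Wc e \<and> y1 \<in> Wc f \<and> b \<in> Ws h1 \<and> w0 = x1*b*y1 \<and> e*b*f = h1 \<and> h1 \<in> L \<and> h1 \<noteq> 1"
proof -
  have eI: "e \<in> idems" and fI: "f \<in> idems" using eL fL L_idems by auto
  define f' where "f' = w0*f*ginv w0"
  have f'I: "f' \<in> idems" unfolding f'_def using conj_idem[OF w0 fI] .
  have "w0*f*ginv w0 = f'" by (simp add: f'_def)
  then have f'w0: "f'*w0 = w0*f" using conj_eq_iff[OF w0, of f f'] by simp
  have ef': "e*f' = f'*e" using idem_comm[OF eI f'I] .
  have ee: "e*e = e" and ff': "f'*f' = f'" using eI f'I unfolding idems_def by auto
  define g where "g = e*f'"
  have gg: "g*g = g"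
  proof -
    have "g*g = e*(f'*e)*f'" unfolding g_def by (simp add: mult.assoc)
    also have "\<dots> = (e*e)*(f'*f')" by (simp add: mult.assoc ef'[symmetric])
    also have "\<dots> = g" using ee ff' g_def by simp
    finally show ?thesis .
  qed
  then have gI: "g \<in> idems" unfolding idems_def by simp
  have ge: "idem_le g e"
  proof -
    have "g*e = e*(f'*e)" unfolding g_def by (simp add: mult.assoc)
    also have "\<dots> = e*(e*f')" by (simp add: ef'[symmetric])
    also have "\<dots> = g" using ee g_def by (simp add: mult.assoc[symmetric])
    finally have 1: "g*e = g" .
    have "e*g = g" unfolding g_def using ee by (simp add: mult.assoc[symmetric])
    with 1 show ?thesis unfolding idem_le_def by simp
  qed
  have gf: "idem_le g f'"
  proof -
    have 1: "g*f' = g" unfolding g_def using ff' by (simp add: mult.assoc)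
    have "f'*g = (f'*e)*f'" unfolding g_def by (simp add: mult.assoc)
    also have "\<dots> = e*(f'*f')" by (simp add: mult.assoc ef'[symmetric])
    also have "\<dots> = g" using ff' g_def by simp
    finally show ?thesis using 1 unfolding idem_le_def by simp
  qed
  obtain u h1 h2 where u: "u \<in> units" "h1 \<in> L" "h2 \<in> L" "idem_le h1 h2" "u*h1*ginv u = g" "u*h2*ginv u = e"
    using ecs4[OF gI eI ge] by blast
  have h2e: "h2 = e" using uniq_conj[OF u(3) eL u(1) one_units] u(6) by simp
  obtain v0 k1 k2 where v0: "v0 \<in> units" "k1 \<in> L" "k2 \<in> L" "idem_le k1 k2" "v0*k1*ginv v0 = g" "v0*k2*ginv v0 = f'"
    using ecs4[OF gI f'I gf] by blast
  have k2f: "k2 = f" using uniq_conj[OF v0(3) fL v0(1) w0] v0(6) f'_def by simp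
  have k1h: "k1 = h1" using uniq_conj[OF v0(2) u(2) v0(1) u(1)] v0(5) u(5) by simp
  have uWc: "u \<in> Wc e" using conj_eq_iff[OF u(1)] u(6) h2e u(1) unfolding Wc_def by auto
  have iuWc: "ginv u \<in> Wc e" using Wc_inv[OF uWc] .
  define v where "v = ginv w0 * v0"
  have vU: "v \<in> units" unfolding v_def using units_mult ginv_units w0 v0(1) by blast
  have w0v: "w0 * v = v0" unfolding v_def using units_inv(1)[OF w0] by (simp add: mult.assoc[symmetric])
  have v0f: "v0 * f = f' * v0" using conj_eq_iff[OF v0(1)] v0(6) k2f by blast
  have iw0f': "ginv w0 * f' = f * ginv w0" using conj_inv_comm[OF w0 f'w0] .
  have vWc: "v \<in> Wc f"
  proof -
    have "v * f = ginv w0 * (v0 * f)" unfolding v_def by (simp add: mult.assoc)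
    also have "\<dots> = (ginv w0 * f') * v0" using v0f by (simp add: mult.assoc)
    also have "\<dots> = f * v" unfolding v_def using iw0f' by (simp add: mult.assoc)
    finally show ?thesis using vU unfolding Wc_def by simp
  qed
  define t where "t = ginv u * w0 * v"
  have tU: "t \<in> units" unfolding t_def using units_mult ginv_units u(1) w0 vU by blast
  have uh1: "u*h1 = g*u" using conj_eq_iff[OF u(1)] u(5) by blast
  have v0h1: "v0*h1 = g*v0" using conj_eq_iff[OF v0(1)] v0(5) k1h by blast
  have iug: "ginv u * g = h1 * ginv u" using conj_inv_comm[OF u(1) uh1[symmetric]] .
  have tWc: "t \<in> Wc h1"
  proof -
    have "t * h1 = ginv u * (w0 * v) * h1" unfolding t_def by (simp add: mult.assoc)
    also have "\<dots> = ginv u * (v0 * h1)" unfolding w0v by (simp add: mult.assoc)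
    also have "\<dots> = (ginv u * g) * v0" unfolding v0h1 by (simp add: mult.assoc)
    also have "\<dots> = h1 * ginv u * (w0 * v)" unfolding iug w0v by (simp add: mult.assoc)
    also have "\<dots> = h1 * t" unfolding t_def by (simp add: mult.assoc)
    finally show ?thesis using tU unfolding Wc_def by simp
  qed
  have lh: "lam S h1 \<subseteq> S" "Wc h1 = subgen (lam S h1)" using lam_spec[OF u(2)] by auto
  obtain T where T: "T \<in> lists (lam S h1)" "prod_list T = t"
    using subgen_words[OF lh(1)] tWc lh(2) by blast
  have upe: "lam_up S h1 \<subseteq> Wc e" using ecs6[OF u(2) u(3) u(4)] h2e lam_up_Wc by blast
  have upf: "lam_up S h1 \<subseteq> Wc f" using ecs6[OF v0(2) v0(3) v0(4)] k1h k2f lam_up_Wc by blast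
  obtain a b where ab: "t = a*b" "a \<in> Wc e" "a \<in> Wc f" "a \<in> Wc h1" "b \<in> Ws h1"
    using decomp[OF u(2) upe upf T(1)] T(2) by auto
  have aU: "a \<in> units" using ab(2) Wc_units by blast
  have bt: "b = ginv a * t"
  proof -
    have "ginv a * t = (ginv a * a) * b" unfolding ab(1) by (simp add: mult.assoc)
    then show ?thesis using units_inv(2)[OF aU] by simp
  qed
  have x1: "u*a \<in> Wc e" using Wc_mult[OF uWc ab(2)] .
  have y1: "ginv v \<in> Wc f" using Wc_inv[OF vWc] .
  have w0eq: "w0 = (u*a)*b*ginv v"
  proof -
    have "(u*a)*b*ginv v = u*t*ginv v" unfolding ab(1) by (simp add: mult.assoc)
    also have "\<dots> = (u * ginv u) * w0 * (v * ginv v)" unfolding t_def by (simp add: mult.assoc)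
    also have "\<dots> = w0" using units_inv(1)[OF u(1)] units_inv(1)[OF vU] by simp
    finally show ?thesis by simp
  qed
  have iaWc: "ginv a \<in> Wc e" using Wc_inv[OF ab(2)] .
  have c1: "e * ginv a = ginv a * e" using Wc_comm[OF iaWc] by simp
  have c2: "e * ginv u = ginv u * e" using Wc_comm[OF iuWc] by simp
  have c3: "v * f = f * v" using Wc_comm[OF vWc] .
  have c4: "h1 * a = a * h1" using Wc_comm[OF ab(4)] by simp
  have ew0f: "e*w0*f = u*h1*ginv u*w0"
  proof -
    have "e*w0*f = e*(w0*f)" by (simp add: mult.assoc)
    also have "\<dots> = e*(f'*w0)" by (subst f'w0) (rule refl)
    also have "\<dots> = g*w0" unfolding g_def by (simp add: mult.assoc)
    finally show ?thesis using u(5) by simp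
  qed
  have ebf: "e*b*f = h1"
  proof -
    have "e*b*f = (e*ginv a)*ginv u*w0*(v*f)" unfolding bt t_def by (simp add: mult.assoc)
    also have "\<dots> = (ginv a*e)*ginv u*w0*(f*v)" by (subst c1, subst c3) (rule refl)
    also have "\<dots> = ginv a*(e*ginv u)*w0*f*v" by (simp add: mult.assoc)
    also have "\<dots> = ginv a*(ginv u*e)*w0*f*v" by (subst c2) (rule refl)
    also have "\<dots> = ginv a*ginv u*(e*w0*f)*v" by (simp add: mult.assoc)
    also have "\<dots> = ginv a*ginv u*(u*h1*ginv u*w0)*v" by (subst ew0f) (rule refl)
    also have "\<dots> = ginv a*(ginv u*u)*h1*(ginv u*w0*v)" by (simp add: mult.assoc)
    also have "\<dots> = ginv a*h1*t" unfolding t_def using units_inv(2)[OF u(1)] by simp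
    also have "\<dots> = ginv a*(h1*a)*b" unfolding ab(1) by (simp add: mult.assoc)
    also have "\<dots> = ginv a*(a*h1)*b" by (subst c4) (rule refl)
    also have "\<dots> = (ginv a*a)*(h1*b)" by (simp add: mult.assoc)
    also have "\<dots> = h1" using units_inv(2)[OF aU] Ws_fix(2)[OF ab(5)] by simp
    finally show ?thesis .
  qed
  have h1n: "h1 \<noteq> 1"
  proof
    assume "h1 = 1"
    then have "e*(b*f) = 1" using ebf by (simp add: mult.assoc)
    then show False using idem_right_inv ee e1 by blast
  qed
  show ?thesis using x1 y1 ab(5) w0eq ebf u(2) h1n by blast
qed


lemma ucancel:
  assumes "(x::'a) \<in> units"
  shows "x*(ginv x*z) = z" "ginv x*(x*z) = z" "x*ginv x = 1" "ginv x*x = 1"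
  using units_inv[OF assms] by (simp_all add: mult.assoc[symmetric])

lemma one_Wc: "(1::'a) \<in> Wc e" unfolding Wc_def by simp

lemma merge_cox:
  assumes eL: "e \<in> L" "e \<noteq> 1" and fL: "f \<in> L" "f \<noteq> 1" and A: "A \<in> units"
  shows "\<exists>x w y. x \<in> Wc e \<and> y \<in> Wc f \<and> w \<in> Red S e f \<and> A = x*w*y \<and> e*w*f \<in> L \<and> e*w*f \<noteq> 1"
proof -
  define D where "D = {x*A*y | x y. x \<in> Wc e \<and> y \<in> Wc f}"
  have AD: "A \<in> D" unfolding D_def using one_Wc by (intro CollectI exI[of _ 1]) auto
  define n where "n = (LEAST n. \<exists>d\<in>D. clen S d = n)"
  have PA: "\<exists>d\<in>D. clen S d = clen S A" by (rule bexI[of _ A, OF refl AD])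
  have "\<exists>d\<in>D. clen S d = n" unfolding n_def by (rule LeastI[of "\<lambda>n. \<exists>d\<in>D. clen S d = n", OF PA])
  then obtain w0 where w0D: "w0 \<in> D" "clen S w0 = n" by (elim bexE) simp
  have mn: "n \<le> clen S d" if "d \<in> D" for d
    unfolding n_def by (rule Least_le[of "\<lambda>n. \<exists>d\<in>D. clen S d = n", OF bexI[of "\<lambda>x. clen S x = clen S d" d D, OF refl that]])
  obtain x0 y0 where xy0: "w0 = x0*A*y0" "x0 \<in> Wc e" "y0 \<in> Wc f" using w0D(1) unfolding D_def by auto
  have x0U: "x0 \<in> units" and y0U: "y0 \<in> units" using xy0 Wc_units by auto
  have w0U: "w0 \<in> units" using xy0(1) units_mult[OF units_mult[OF x0U A] y0U] by simp
  obtain x1 y1 b h1 where K: "x1 \<in> Wc e" "y1 \<in> Wc f" "b \<in> Ws h1" "w0 = x1*b*y1" "e*b*f = h1" "h1 \<in> L" "h1 \<noteq> 1"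
    using KR[OF eL(1) eL(2) fL(1) w0U] by blast
  have x1U: "x1 \<in> units" and y1U: "y1 \<in> units" using K Wc_units by auto
  have I: "lam S e \<subseteq> S" "Wc e = subgen (lam S e)" using lam_spec[OF eL(1)] by auto
  have J: "lam S f \<subseteq> S" "Wc f = subgen (lam S f)" using lam_spec[OF fL(1)] by auto
  have KK: "lam_low S h1 \<subseteq> S" "Ws h1 = subgen (lam_low S h1)" using lam_low_spec[OF K(6)] by auto
  have bb: "ginv x1 * w0 * ginv y1 = b" unfolding K(4) using x1U y1U by (simp add: mult.assoc ucancel)
  have "\<exists>x w y. ginv x1 * w0 * ginv y1 = x * w * y \<and> x \<in> subgen (lam S e) \<and> x \<in> subgen (lam_low S h1) \<and>
     y \<in> subgen (lam S f) \<and> y \<in> subgen (lam_low S h1) \<and> w \<in> units \<and> clen S w \<le> clen S w0"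
  proof (rule coset_reduce[OF I(1) J(1) KK(1)])
    show "ginv x1 \<in> subgen (lam S e)" using Wc_inv[OF K(1)] I(2) by simp
    show "ginv y1 \<in> subgen (lam S f)" using Wc_inv[OF K(2)] J(2) by simp
    show "w0 \<in> units" by (rule w0U)
    show "ginv x1 * w0 * ginv y1 \<in> subgen (lam_low S h1)" using bb K(3) KK(2) by simp
  qed
  then obtain x2 w2 y2 where R: "b = x2*w2*y2" "x2 \<in> Wc e" "x2 \<in> Ws h1" "y2 \<in> Wc f" "y2 \<in> Ws h1"
     "w2 \<in> units" "clen S w2 \<le> clen S w0"
    using bb I(2) J(2) KK(2) by auto
  have x2U: "x2 \<in> units" and y2U: "y2 \<in> units" using R Wc_units by auto
  define X where "X = ginv x0 * x1 * x2"
  define Y where "Y = y2 * y1 * ginv y0"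
  have XW: "X \<in> Wc e" unfolding X_def by (rule Wc_mult[OF Wc_mult[OF Wc_inv[OF xy0(2)] K(1)] R(2)])
  have YW: "Y \<in> Wc f" unfolding Y_def by (rule Wc_mult[OF Wc_mult[OF R(4) K(2)] Wc_inv[OF xy0(3)]])
  have XU: "X \<in> units" and YU: "Y \<in> units" using XW YW Wc_units by auto
  have hA: "A = ginv x0 * w0 * ginv y0" unfolding xy0(1) using x0U y0U by (simp add: mult.assoc ucancel)
  have AXY: "A = X * w2 * Y" unfolding X_def Y_def using hA K(4) R(1) by (simp add: mult.assoc)
  have w2A: "w2 = ginv X * A * ginv Y" unfolding AXY using XU YU by (simp add: mult.assoc ucancel)
  have w2D: "w2 \<in> D" unfolding D_def using w2A Wc_inv[OF XW] Wc_inv[OF YW] by (intro CollectI exI conjI)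
  have cl: "clen S w2 = n" using mn[OF w2D] R(7) w0D(2) by simp
  have red: "w2 \<in> Red S e f"
    unfolding Red_def
  proof (intro CollectI conjI ballI)
    show "w2 \<in> units" by (rule R(6))
    fix x y assume x: "x \<in> subgen (lam S e)" and y: "y \<in> subgen (lam S f)"
    have "x * w2 * y = (x * ginv X) * A * (ginv Y * y)" unfolding w2A by (simp add: mult.assoc)
    moreover have "x * ginv X \<in> Wc e" using Wc_mult[OF _ Wc_inv[OF XW]] x I(2) by simp
    moreover have "ginv Y * y \<in> Wc f" using Wc_mult[OF Wc_inv[OF YW]] y J(2) by simp
    ultimately have "x * w2 * y \<in> D" unfolding D_def by (intro CollectI exI conjI)
    then show "clen S w2 \<le> clen S (x * w2 * y)" using mn cl by simp
  qed
  have ix2: "ginv x2 \<in> Wc e" "ginv x2 \<in> Ws h1" using Wc_inv[OF R(2)] Ws_inv[OF R(3)] by auto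
  have iy2: "ginv y2 \<in> Wc f" "ginv y2 \<in> Ws h1" using Wc_inv[OF R(4)] Ws_inv[OF R(5)] by auto
  have w2b: "w2 = ginv x2 * b * ginv y2" unfolding R(1) using x2U y2U by (simp add: mult.assoc ucancel)
  have "e * w2 * f = (e * ginv x2) * b * (ginv y2 * f)" unfolding w2b by (simp add: mult.assoc)
  also have "\<dots> = (ginv x2 * e) * b * (f * ginv y2)"
    using Wc_comm[OF ix2(1)] Wc_comm[OF iy2(1)] by simp
  also have "\<dots> = ginv x2 * (e * b * f) * ginv y2" by (simp add: mult.assoc)
  also have "\<dots> = ginv x2 * h1 * ginv y2" using K(5) by simp
  also have "\<dots> = h1" using Ws_fix(1)[OF ix2(2)] Ws_fix(2)[OF iy2(2)] by simp
  finally have ewf: "e * w2 * f = h1" .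
  show ?thesis using XW YW red AXY ewf K(6) K(7) by (intro exI[of _ X] exI[of _ w2] exI[of _ Y]) simp
qed

end


lemma alt_set: "set (alt_word s t m) \<subseteq> {s,t}"
  by (induction m arbitrary: s t) auto

lemma alt_add: "alt_word s t (a+b) = alt_word s t a @ (if even a then alt_word s t b else alt_word t s b)"
  by (induction a arbitrary: s t) auto

lemma alt_double: "alt_word s t (2*m) = concat (replicate m [s,t])"
proof (induction m)
  case 0 then show ?case by simp
next
  case (Suc m)
  have "alt_word s t (2*Suc m) = s # t # alt_word s t (2*m)" by (simp add: numeral_2_eq_2)
  then show ?case using Suc by simp
qed

lemma alt_snoc: "alt_word s t (Suc n) = alt_word s t n @ [if even n then s else t]"
  by (induction n arbitrary: s t) auto

lemma rev_alt_word: "rev (alt_word t s m) = (if even m then alt_word s t m else alt_word t s m)"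
proof (induction m arbitrary: s t)
  case 0 then show ?case by simp
next
  case (Suc m)
  have "rev (alt_word t s (Suc m)) = rev (alt_word s t m) @ [t]" by simp
  also have "\<dots> = (if even m then alt_word t s m else alt_word s t m) @ [t]" using Suc.IH[of s t] by simp
  also have "\<dots> = (if even (Suc m) then alt_word s t (Suc m) else alt_word t s (Suc m))"
    by (auto simp add: alt_snoc simp del: alt_word.simps(2))
  finally show ?case .
qed

lemma concat_alt: "concat (replicate m [s,t]) = alt_word s t m @ rev (alt_word t s m)"
proof -
  have "concat (replicate m [s,t]) = alt_word s t (m+m)" using alt_double[of s t m] by (simp add: mult_2)
  also have "\<dots> = alt_word s t m @ rev (alt_word t s m)" by (simp add: alt_add rev_alt_word)
  finally show ?thesis .
qed

locale rcw = rc S L for S :: "'a::monoid_mult set" and L +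
  fixes rw :: "'a \<Rightarrow> 'a list"
  assumes rw: "\<forall>w \<in> units. rw w \<in> lists S \<and> prod_list (rw w) = w \<and> length (rw w) = clen S w"
begin

definition Rl where "Rl = cox1_rels S \<union> cox2_rels S \<union> ren1_rels L S \<union> ren2_rels L S \<union> ren3_rels L S rw"

lemma rw_S: "w \<in> units \<Longrightarrow> rw w \<in> lists S" and rw_prod: "w \<in> units \<Longrightarrow> prod_list (rw w) = w"
  using rw by auto

lemma Rl_in: "r \<in> cox1_rels S \<Longrightarrow> r \<in> wcong Rl" "r \<in> cox2_rels S \<Longrightarrow> r \<in> wcong Rl"
  "r \<in> ren1_rels L S \<Longrightarrow> r \<in> wcong Rl" "r \<in> ren2_rels L S \<Longrightarrow> r \<in> wcong Rl"
  "r \<in> ren3_rels L S rw \<Longrightarrow> r \<in> wcong Rl"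
  unfolding Rl_def using wcong_rel[of "fst r" "snd r"] by auto

lemma urev: "u \<in> lists S \<Longrightarrow> (u @ rev u, []) \<in> wcong Rl"
proof (induction u)
  case Nil then show ?case by simp
next
  case (Cons s u)
  then have "(u @ rev u, []) \<in> wcong Rl" by simp
  then have "([s] @ (u @ rev u) @ [s], [s] @ [] @ [s]) \<in> wcong Rl" by (rule wcong_ctx)
  moreover have "([s,s], []) \<in> wcong Rl" using Cons.prems by (intro Rl_in(1)) (auto simp: cox1_rels_def)
  ultimately show ?case by (auto intro: wcong_trans)
qed

lemma cox_sub: "coxeter_rels S \<subseteq> wcong Rl"
proof
  fix r assume r: "r \<in> coxeter_rels S"
  show "r \<in> wcong Rl"
  proof (cases "r \<in> {([s, s], []) | s. s \<in> S}")
    case True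
    then show ?thesis by (intro Rl_in(1)) (auto simp: cox1_rels_def)
  next
    case False
    then obtain s t m where st: "r = (concat (replicate m [s, t]), [])" "s \<in> S" "t \<in> S" "s \<noteq> t" "has_order (s * t) m"
      using r unfolding coxeter_rels_def by blast
    have "(alt_word s t m, alt_word t s m) \<in> wcong Rl"
      using st by (intro Rl_in(2)) (auto simp: cox2_rels_def)
    then have "(alt_word s t m @ rev (alt_word t s m), alt_word t s m @ rev (alt_word t s m)) \<in> wcong Rl"
      using wcong_ctx[of _ _ Rl "[]"] by simp
    moreover have "(alt_word t s m @ rev (alt_word t s m), []) \<in> wcong Rl"
      using alt_set[of t s m] st by (intro urev) auto
    ultimately have "(alt_word s t m @ rev (alt_word t s m), []) \<in> wcong Rl" by (rule wcong_trans)
    then show ?thesis using st(1) concat_alt[of m s t] by simp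
  qed
qed

lemma wS: "u \<in> lists S \<Longrightarrow> v \<in> lists S \<Longrightarrow> prod_list u = prod_list v \<Longrightarrow> (u,v) \<in> wcong Rl"
  using pres wcong_mono[OF cox_sub] by blast

lemma sound_rel: "\<forall>(l,r)\<in>Rl. prod_list l = prod_list r"
proof (intro ballI, clarify)
  fix l r assume lr: "(l,r) \<in> Rl"
  show "prod_list l = prod_list r"
  proof -
    consider "(l,r) \<in> cox1_rels S" | "(l,r) \<in> cox2_rels S" | "(l,r) \<in> ren1_rels L S" | "(l,r) \<in> ren2_rels L S"
      | "(l,r) \<in> ren3_rels L S rw" using lr unfolding Rl_def by blast
    then show ?thesis
    proof cases
      case 1 then show ?thesis unfolding cox1_rels_def using invol by auto
    next
      case 2
      then obtain s t m where st: "l = alt_word s t m" "r = alt_word t s m" "s \<in> S" "t \<in> S" "has_order (s*t) m"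
        unfolding cox2_rels_def by blast
      have "(s*t)^m = 1" using st(5) unfolding has_order_def by simp
      then have p1: "prod_list (alt_word s t m) * prod_list (rev (alt_word t s m)) = 1"
        using prod_alt[of m s t] concat_alt[of m s t] by simp
      have ts: "alt_word t s m \<in> lists S" using alt_set[of t s m] st by auto
      have p2: "prod_list (rev (alt_word t s m)) * prod_list (alt_word t s m) = 1" using prod_rev(2)[OF ts] .
      have "prod_list (alt_word s t m) = prod_list (alt_word s t m) * (prod_list (rev (alt_word t s m)) * prod_list (alt_word t s m))"
        using p2 by simp
      also have "\<dots> = prod_list (alt_word t s m)" using p1 by (simp add: mult.assoc[symmetric])
      finally show ?thesis using st by simp
    next
      case 3 then show ?thesis unfolding ren1_rels_def lam_up_def by auto
    next
      case 4
      then obtain s e where se: "e \<in> L" "s \<in> lam_low S e" "(l,r) = ([s,e],[e]) \<or> (l,r) = ([e,s],[e])"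
        unfolding ren2_rels_def by blast
      have "s \<in> Ws e" using lam_low_spec[OF se(1)] se(2) by (auto intro: subgen.gen)
      then show ?thesis using se(3) Ws_fix by auto
    next
      case 5
      then obtain e f w where ew: "l = e # rw w @ [f]" "r = [e*w*f]" "w \<in> Red S e f"
        unfolding ren3_rels_def by blast
      have "w \<in> units" using ew(3) unfolding Red_def by simp
      then show ?thesis using ew rw_prod by (simp add: mult.assoc)
    qed
  qed
qed

lemma sound: "(u,v) \<in> wcong Rl \<Longrightarrow> prod_list u = prod_list v"
  using wcong_sound[OF sound_rel] by blast


lemma low_absorb_r: "e \<in> L \<Longrightarrow> e \<noteq> 1 \<Longrightarrow> H \<in> lists (lam_low S e) \<Longrightarrow> ([e]@H, [e]) \<in> wcong Rl"
proof (induction H)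
  case Nil then show ?case by simp
next
  case (Cons s H)
  have "([e,s], [e]) \<in> wcong Rl" using Cons.prems by (intro Rl_in(4)) (auto simp: ren2_rels_def)
  then have "([]@[e,s]@H, []@[e]@H) \<in> wcong Rl" by (rule wcong_ctx)
  then show ?case using Cons by (auto intro: wcong_trans)
qed

lemma low_absorb_l: "e \<in> L \<Longrightarrow> e \<noteq> 1 \<Longrightarrow> H \<in> lists (lam_low S e) \<Longrightarrow> (H@[e], [e]) \<in> wcong Rl"
proof (induction H rule: rev_induct)
  case Nil then show ?case by simp
next
  case (snoc s H)
  have "([s,e], [e]) \<in> wcong Rl" using snoc.prems by (intro Rl_in(4)) (auto simp: ren2_rels_def)
  then have "(H@[s,e]@[], H@[e]@[]) \<in> wcong Rl" by (rule wcong_ctx)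
  then show ?case using snoc by (auto intro: wcong_trans)
qed

lemma letter_cases:
  assumes eL: "e \<in> L" and s: "s \<in> lam S e"
  shows "s \<in> S \<and> (s \<in> lam_up S e \<or> (\<exists>H \<in> lists (lam_low S e). prod_list H = s))"
proof -
  have sS: "s \<in> S" and sW: "s \<in> Wc e" using lam_spec[OF eL] s by (auto intro: subgen.gen)
  show ?thesis
  proof (cases "s*e = e")
    case True
    then have "s \<in> Ws e" using sW unfolding Wc_def Ws_def by auto
    then have "s \<in> subgen (lam_low S e)" using lam_low_spec[OF eL] by simp
    then show ?thesis using subgen_words lam_low_spec[OF eL] sS by blast
  next
    case False
    then show ?thesis using sS sW unfolding lam_up_def Wc_def by auto
  qed
qed

lemma absorbL:
  assumes eL: "e \<in> L" "e \<noteq> 1"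
  shows "X \<in> lists (lam S e) \<Longrightarrow> \<exists>X'\<in>lists S. ([e]@X, X'@[e]) \<in> wcong Rl"
proof (induction X)
  case Nil then show ?case by (intro bexI[of _ "[]"]) auto
next
  case (Cons s X)
  then obtain X' where X': "X' \<in> lists S" "([e]@X, X'@[e]) \<in> wcong Rl" by auto
  have sl: "s \<in> lam S e" using Cons.prems by simp
  from letter_cases[OF eL(1) sl] have sS: "s \<in> S" and
    c: "s \<in> lam_up S e \<or> (\<exists>H \<in> lists (lam_low S e). prod_list H = s)" by auto
  from c show ?case
  proof
    assume "s \<in> lam_up S e"
    then have "([s,e],[e,s]) \<in> wcong Rl" using eL by (intro Rl_in(3)) (auto simp: ren1_rels_def)
    then have "([e,s],[s,e]) \<in> wcong Rl" by (rule wcong_sym)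
    then have "([]@[e,s]@X, []@[s,e]@X) \<in> wcong Rl" by (rule wcong_ctx)
    moreover have "([s]@([e]@X)@[], [s]@(X'@[e])@[]) \<in> wcong Rl" using X'(2) by (rule wcong_ctx)
    ultimately have "([e]@(s#X), (s#X')@[e]) \<in> wcong Rl" by (auto intro: wcong_trans)
    then show ?thesis using X' sS by (intro bexI[of _ "s#X'"]) auto
  next
    assume "\<exists>H \<in> lists (lam_low S e). prod_list H = s"
    then obtain H where H: "H \<in> lists (lam_low S e)" "prod_list H = s" by blast
    have HS: "H \<in> lists S" using H lam_low_spec[OF eL(1)] by auto
    have "([s], H) \<in> wcong Rl" using wS[of "[s]" H] HS sS H by simp
    then have "([e]@[s]@X, [e]@H@X) \<in> wcong Rl" by (rule wcong_ctx)
    moreover have "([e]@H@X, [e]@X) \<in> wcong Rl"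
      using wcong_ctx[OF low_absorb_r[OF eL H(1)], of "[]" X] by simp
    ultimately have "([e]@(s#X), X'@[e]) \<in> wcong Rl" using X'(2) by (auto intro: wcong_trans)
    then show ?thesis using X' by blast
  qed
qed

lemma absorbR:
  assumes eL: "e \<in> L" "e \<noteq> 1"
  shows "Y \<in> lists (lam S e) \<Longrightarrow> \<exists>Y'\<in>lists S. (Y@[e], [e]@Y') \<in> wcong Rl"
proof (induction Y rule: rev_induct)
  case Nil then show ?case by (intro bexI[of _ "[]"]) auto
next
  case (snoc s Y)
  then obtain Y' where Y': "Y' \<in> lists S" "(Y@[e], [e]@Y') \<in> wcong Rl" by auto
  have sl: "s \<in> lam S e" using snoc.prems by simp
  from letter_cases[OF eL(1) sl] have sS: "s \<in> S" and
    c: "s \<in> lam_up S e \<or> (\<exists>H \<in> lists (lam_low S e). prod_list H = s)" by auto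
  from c show ?case
  proof
    assume "s \<in> lam_up S e"
    then have "([s,e],[e,s]) \<in> wcong Rl" using eL by (intro Rl_in(3)) (auto simp: ren1_rels_def)
    then have "(Y@[s,e]@[], Y@[e,s]@[]) \<in> wcong Rl" by (rule wcong_ctx)
    moreover have "([]@(Y@[e])@[s], []@([e]@Y')@[s]) \<in> wcong Rl" using Y'(2) by (rule wcong_ctx)
    ultimately have "((Y@[s])@[e], [e]@(Y'@[s])) \<in> wcong Rl" by (auto intro: wcong_trans)
    then show ?thesis using Y' sS by (intro bexI[of _ "Y'@[s]"]) auto
  next
    assume "\<exists>H \<in> lists (lam_low S e). prod_list H = s"
    then obtain H where H: "H \<in> lists (lam_low S e)" "prod_list H = s" by blast
    have HS: "H \<in> lists S" using H lam_low_spec[OF eL(1)] by auto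
    have "([s], H) \<in> wcong Rl" using wS[of "[s]" H] HS sS H by simp
    then have "(Y@[s]@[e], Y@H@[e]) \<in> wcong Rl" by (rule wcong_ctx)
    moreover have "(Y@H@[e], Y@[e]) \<in> wcong Rl"
      using wcong_ctx[OF low_absorb_l[OF eL H(1)], of Y "[]"] by simp
    ultimately have "((Y@[s])@[e], [e]@Y') \<in> wcong Rl" using Y'(2) by (auto intro: wcong_trans)
    then show ?thesis using Y' by blast
  qed
qed

lemma merge:
  assumes eL: "e \<in> L" "e \<noteq> 1" and fL: "f \<in> L" "f \<noteq> 1" and a: "a \<in> lists S"
  shows "\<exists>p g q. p \<in> lists S \<and> q \<in> lists S \<and> g \<in> L \<and> g \<noteq> 1 \<and> ([e]@a@[f], p@[g]@q) \<in> wcong Rl"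
proof -
  obtain x w y where M: "x \<in> Wc e" "y \<in> Wc f" "w \<in> Red S e f" "prod_list a = x*w*y" "e*w*f \<in> L" "e*w*f \<noteq> 1"
    using merge_cox[OF eL fL prod_units[OF a]] by blast
  have I: "lam S e \<subseteq> S" "Wc e = subgen (lam S e)" using lam_spec[OF eL(1)] by auto
  have J: "lam S f \<subseteq> S" "Wc f = subgen (lam S f)" using lam_spec[OF fL(1)] by auto
  obtain X where X: "X \<in> lists (lam S e)" "prod_list X = x" using subgen_words[OF I(1)] M(1) I(2) by auto
  obtain Y where Y: "Y \<in> lists (lam S f)" "prod_list Y = y" using subgen_words[OF J(1)] M(2) J(2) by auto
  have wU: "w \<in> units" using M(3) unfolding Red_def by simp
  have XS: "X \<in> lists S" and YS: "Y \<in> lists S" using X Y I J by auto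
  have "(a, X @ rw w @ Y) \<in> wcong Rl"
    using wS[OF a] XS YS rw_S[OF wU] rw_prod[OF wU] X Y M(4) by (simp add: mult.assoc)
  then have c1: "([e]@a@[f], [e]@(X @ rw w @ Y)@[f]) \<in> wcong Rl" by (rule wcong_ctx)
  obtain X' where X': "X' \<in> lists S" "([e]@X, X'@[e]) \<in> wcong Rl" using absorbL[OF eL X(1)] by blast
  obtain Y' where Y': "Y' \<in> lists S" "(Y@[f], [f]@Y') \<in> wcong Rl" using absorbR[OF fL Y(1)] by blast
  have c2: "([e]@(X @ rw w @ Y)@[f], X'@[e]@rw w@[f]@Y') \<in> wcong Rl"
  proof -
    have "(([e]@X) @ rw w @ (Y@[f]), (X'@[e]) @ rw w @ ([f]@Y')) \<in> wcong Rl"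
      using wcong_app[OF X'(2) wcong_app[OF wcong_refl Y'(2)]] by simp
    then show ?thesis by simp
  qed
  have "(e # rw w @ [f], [e*w*f]) \<in> wcong Rl"
    using M eL fL by (intro Rl_in(5)) (auto simp: ren3_rels_def)
  then have c3: "(X'@(e # rw w @ [f])@Y', X'@[e*w*f]@Y') \<in> wcong Rl" by (rule wcong_ctx)
  have "([e]@a@[f], X'@[e*w*f]@Y') \<in> wcong Rl"
    using wcong_trans[OF c1 wcong_trans[OF c2]] c3 by simp
  then show ?thesis using X'(1) Y'(1) M(5) M(6) by blast
qed

definition XG where "XG = S \<union> (L - {1})"

lemma NF: "u \<in> lists XG \<Longrightarrow> (\<exists>v\<in>lists S. (u,v) \<in> wcong Rl) \<or>
   (\<exists>a g c. a \<in> lists S \<and> c \<in> lists S \<and> g \<in> L \<and> g \<noteq> 1 \<and> (u, a@[g]@c) \<in> wcong Rl)"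
proof (induction u)
  case Nil then show ?case by (intro disjI1 bexI[of _ "[]"]) auto
next
  case (Cons x u)
  then have IH: "(\<exists>v\<in>lists S. (u,v) \<in> wcong Rl) \<or>
   (\<exists>a g c. a \<in> lists S \<and> c \<in> lists S \<and> g \<in> L \<and> g \<noteq> 1 \<and> (u, a@[g]@c) \<in> wcong Rl)" by simp
  have x: "x \<in> S \<or> (x \<in> L \<and> x \<noteq> 1)" using Cons.prems unfolding XG_def by auto
  show ?case
  proof (cases "x \<in> S")
    case True
    from IH show ?thesis
    proof
      assume "\<exists>v\<in>lists S. (u,v) \<in> wcong Rl"
      then obtain v where v: "v \<in> lists S" "(u,v) \<in> wcong Rl" by blast
      have "([x]@u@[], [x]@v@[]) \<in> wcong Rl" using v(2) by (rule wcong_ctx)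
      then show ?thesis using v True by (intro disjI1 bexI[of _ "x#v"]) auto
    next
      assume "\<exists>a g c. a \<in> lists S \<and> c \<in> lists S \<and> g \<in> L \<and> g \<noteq> 1 \<and> (u, a@[g]@c) \<in> wcong Rl"
      then obtain a g c where agc: "a \<in> lists S" "c \<in> lists S" "g \<in> L" "g \<noteq> 1" "(u, a@[g]@c) \<in> wcong Rl" by blast
      have "([x]@u@[], [x]@(a@[g]@c)@[]) \<in> wcong Rl" using agc(5) by (rule wcong_ctx)
      then have "(x#u, (x#a)@[g]@c) \<in> wcong Rl" by simp
      then show ?thesis using agc True by (intro disjI2 exI[of _ "x#a"] exI[of _ g] exI[of _ c]) auto
    qed
  next
    case False
    then have xL: "x \<in> L" "x \<noteq> 1" using x by auto
    from IH show ?thesis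
    proof
      assume "\<exists>v\<in>lists S. (u,v) \<in> wcong Rl"
      then obtain v where v: "v \<in> lists S" "(u,v) \<in> wcong Rl" by blast
      have "([x]@u@[], [x]@v@[]) \<in> wcong Rl" using v(2) by (rule wcong_ctx)
      then have "(x#u, []@[x]@v) \<in> wcong Rl" by simp
      then show ?thesis using v xL by (intro disjI2 exI[of _ "[]"] exI[of _ x] exI[of _ v]) auto
    next
      assume "\<exists>a g c. a \<in> lists S \<and> c \<in> lists S \<and> g \<in> L \<and> g \<noteq> 1 \<and> (u, a@[g]@c) \<in> wcong Rl"
      then obtain a g c where agc: "a \<in> lists S" "c \<in> lists S" "g \<in> L" "g \<noteq> 1" "(u, a@[g]@c) \<in> wcong Rl" by blast
      have c1: "([x]@u@[], [x]@(a@[g]@c)@[]) \<in> wcong Rl" using agc(5) by (rule wcong_ctx)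
      obtain p g' q where m: "p \<in> lists S" "q \<in> lists S" "g' \<in> L" "g' \<noteq> 1" "([x]@a@[g], p@[g']@q) \<in> wcong Rl"
        using merge[OF xL agc(3) agc(4) agc(1)] by blast
      have c2: "(([x]@a@[g])@c, (p@[g']@q)@c) \<in> wcong Rl" using wcong_ctx[OF m(5), of "[]" c] by simp
      have "(x#u, p@[g']@(q@c)) \<in> wcong Rl" using wcong_trans[OF c1] c2 by simp
      then show ?thesis using m agc by (intro disjI2 exI[of _ p] exI[of _ g'] exI[of _ "q@c"]) auto
    qed
  qed
qed


lemma not_unit_nf:
  assumes "a \<in> lists S" "c \<in> lists S" "g \<in> L" "g \<noteq> 1"
  shows "prod_list (a@[g]@c) \<notin> units"
proof
  assume P: "prod_list (a@[g]@c) \<in> units"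
  have AU: "prod_list a \<in> units" and CU: "prod_list c \<in> units" using prod_units assms by auto
  have "ginv (prod_list a) * prod_list (a@[g]@c) * ginv (prod_list c) = g"
    using AU CU by (simp add: mult.assoc ucancel)
  moreover have "ginv (prod_list a) * prod_list (a@[g]@c) * ginv (prod_list c) \<in> units"
    using AU CU P by (intro units_mult ginv_units)
  ultimately have "g \<in> units" by simp
  moreover have "g*g = g" using assms(3) L_idems unfolding idems_def by auto
  ultimately show False using idem_unit assms(4) by blast
qed

lemma idem_absorb:
  assumes E: "(E1::'a) \<in> idems" "E2 \<in> idems" and U: "U1 \<in> units" "U2 \<in> units" and eq: "E1*U1 = E2*U2"
  shows "E1 = E2"
proof -
  have e1: "E1*E1 = E1" and e2: "E2*E2 = E2" using E unfolding idems_def by auto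
  have E1h: "E1 = E2*(U2*ginv U1)"
  proof -
    have "E1 = E1*U1*ginv U1" using U(1) by (simp add: mult.assoc ucancel)
    also have "\<dots> = E2*(U2*ginv U1)" using eq by (simp add: mult.assoc[symmetric])
    finally show ?thesis .
  qed
  have E2h: "E2 = E1*(U1*ginv U2)"
  proof -
    have "E2 = E2*U2*ginv U2" using U(2) by (simp add: mult.assoc ucancel)
    also have "\<dots> = E1*(U1*ginv U2)" using eq by (simp add: mult.assoc[symmetric])
    finally show ?thesis .
  qed
  have "E2*E1 = E1"
  proof -
    have "E2*E1 = (E2*E2)*(U2*ginv U1)" using E1h by (metis mult.assoc)
    then show ?thesis using e2 E1h by simp
  qed
  moreover have "E1*E2 = E2"
  proof -
    have "E1*E2 = (E1*E1)*(U1*ginv U2)" using E2h by (metis mult.assoc)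
    then show ?thesis using e1 E2h by simp
  qed
  moreover have "E1*E2 = E2*E1" using idem_comm E by blast
  ultimately show ?thesis by simp
qed

lemma fix_lemma:
  assumes gL: "g \<in> L" and kU: "k \<in> units" and gk: "g*k = g"
  shows "k \<in> Ws g"
proof -
  have gI: "g \<in> idems" using gL L_idems by auto
  then have gg: "g*g = g" unfolding idems_def by simp
  define f where "f = k*g*ginv k"
  have fI: "f \<in> idems" unfolding f_def using conj_idem[OF kU gI] .
  have gik: "g * ginv k = g"
  proof -
    have "g * ginv k = (g*k)*ginv k" using gk by simp
    also have "\<dots> = g" using kU by (simp add: mult.assoc ucancel)
    finally show ?thesis .
  qed
  have gf: "g*f = g"
  proof -
    have "g*f = (g*k)*g*ginv k" unfolding f_def by (simp add: mult.assoc)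
    also have "\<dots> = g * ginv k" using gk gg by simp
    finally show ?thesis using gik by simp
  qed
  have fg: "f*g = g" using gf idem_comm[OF gI fI] by simp
  have le: "idem_le g f" unfolding idem_le_def using gf fg by simp
  obtain w f1 f2 where W: "w \<in> units" "f1 \<in> L" "f2 \<in> L" "w*f1*ginv w = g" "w*f2*ginv w = f"
    using ecs4[OF gI fI le] by blast
  have "f1 = g" using uniq_conj[OF W(2) gL W(1) one_units] W(4) by simp
  moreover have "f2 = g" using uniq_conj[OF W(3) gL W(1) kU] W(5) f_def by simp
  ultimately have "f = g" using W(4) W(5) by simp
  then have "k*g*ginv k = g" unfolding f_def .
  then have "k*g = g*k" using conj_eq_iff[OF kU] by blast
  then have "k*g = g" using gk by simp
  then show ?thesis using gk kU unfolding Ws_def by simp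
qed

lemma uniq:
  assumes a: "a \<in> lists S" "c \<in> lists S" "a' \<in> lists S" "c' \<in> lists S"
    and g: "g \<in> L" "g \<noteq> 1" "g' \<in> L" "g' \<noteq> 1"
    and eq: "prod_list (a@[g]@c) = prod_list (a'@[g']@c')"
  shows "(a@[g]@c, a'@[g']@c') \<in> wcong Rl"
proof -
  define A where "A = prod_list a"
  define C where "C = prod_list c"
  define A' where "A' = prod_list a'"
  define C' where "C' = prod_list c'"
  have U: "A \<in> units" "C \<in> units" "A' \<in> units" "C' \<in> units"
    unfolding A_def C_def A'_def C'_def using prod_units a by auto
  have gI: "g \<in> idems" "g' \<in> idems" using g L_idems by auto
  have P: "A*g*C = A'*g'*C'" using eq unfolding A_def C_def A'_def C'_def by (simp add: mult.assoc)
  have E: "A*g*ginv A = A'*g'*ginv A'"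
  proof (rule idem_absorb)
    show "A*g*ginv A \<in> idems" "A'*g'*ginv A' \<in> idems" using conj_idem U gI by auto
    show "A*C \<in> units" "A'*C' \<in> units" using U units_mult by auto
    have "A*g*ginv A*(A*C) = A*g*C" using U by (simp add: mult.assoc ucancel)
    also have "\<dots> = A'*g'*C'" by (rule P)
    also have "\<dots> = A'*g'*ginv A'*(A'*C')" using U by (simp add: mult.assoc ucancel)
    finally show "A*g*ginv A*(A*C) = A'*g'*ginv A'*(A'*C')" .
  qed
  have gg': "g = g'" using uniq_conj[OF g(1) g(3) U(1) U(3) E] .
  define z where "z = ginv A * A'"
  have zU: "z \<in> units" unfolding z_def using U by (intro units_mult ginv_units)
  have zc: "z*g = g*z"
  proof -
    have "z*g = ginv A * (A'*g'*ginv A') * A'" unfolding z_def gg' using U by (simp add: mult.assoc ucancel)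
    also have "\<dots> = ginv A * (A*g*ginv A) * A'" using E by simp
    also have "\<dots> = g*z" unfolding z_def using U by (simp add: mult.assoc ucancel)
    finally show ?thesis .
  qed
  have zW: "z \<in> Wc g" using zU zc unfolding Wc_def by simp
  have lg: "lam S g \<subseteq> S" "Wc g = subgen (lam S g)" using lam_spec[OF g(1)] by auto
  obtain Z where Z: "Z \<in> lists (lam S g)" "prod_list Z = z" using subgen_words[OF lg(1)] zW lg(2) by auto
  have ZS: "Z \<in> lists S" using Z lg by auto
  have pz: "prod_list (a@Z) = prod_list a'"
    using Z(2) ucancel(1)[OF U(1)] unfolding z_def A_def A'_def by simp
  have aZS: "a@Z \<in> lists S" using a(1) ZS by simp
  have "(a', a@Z) \<in> wcong Rl" using wS[OF a(3) aZS pz[symmetric]] .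
  then have c1: "(a'@[g']@c', a@Z@[g]@c') \<in> wcong Rl" using wcong_ctx[of a' "a@Z" Rl "[]" "[g']@c'"] gg' by simp
  obtain Z' where Z': "Z' \<in> lists S" "(Z@[g], [g]@Z') \<in> wcong Rl" using absorbR[OF g(1) g(2) Z(1)] by blast
  have c2: "(a@Z@[g]@c', a@[g]@Z'@c') \<in> wcong Rl" using wcong_ctx[OF Z'(2), of a c'] by simp
  have "prod_list (a@[g]@Z'@c') = prod_list (a@[g]@c)"
    using sound[OF wcong_trans[OF c1 c2]] eq by simp
  then have "A * (g * prod_list (Z'@c')) = A * (g * C)" unfolding A_def C_def by (simp add: mult.assoc)
  then have gz: "g * prod_list (Z'@c') = g * C" using cancel_left U(1) by blast
  define k where "k = prod_list (Z'@c') * ginv C"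
  have Z'c'S: "Z'@c' \<in> lists S" using Z'(1) a(4) by simp
  have kU: "k \<in> units" unfolding k_def using prod_units[OF Z'c'S] U by (intro units_mult ginv_units)
  have gk: "g*k = g"
  proof -
    have "g*k = (g * prod_list (Z'@c')) * ginv C" unfolding k_def by (simp only: mult.assoc)
    also have "\<dots> = g*C*ginv C" by (subst gz) (rule refl)
    also have "\<dots> = g" by (simp add: mult.assoc ucancel(3)[OF U(2)])
    finally show ?thesis .
  qed
  have kW: "k \<in> Ws g" using fix_lemma[OF g(1) kU gk] .
  have ll: "lam_low S g \<subseteq> S" "Ws g = subgen (lam_low S g)" using lam_low_spec[OF g(1)] by auto
  obtain K where K: "K \<in> lists (lam_low S g)" "prod_list K = k" using subgen_words[OF ll(1)] kW ll(2) by auto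
  have KS: "K \<in> lists S" using K ll by auto
  have "prod_list (K@c) = k * C" using K(2) unfolding C_def by simp
  also have "\<dots> = prod_list (Z'@c') * (ginv C * C)" unfolding k_def by (simp only: mult.assoc)
  also have "\<dots> = prod_list (Z'@c')" using ucancel(4)[OF U(2)] by simp
  finally have "prod_list (K@c) = prod_list (Z'@c')" .
  then have "(Z'@c', K@c) \<in> wcong Rl" using wS Z'c'S KS a(2) by simp
  then have c3: "(a@[g]@Z'@c', a@[g]@K@c) \<in> wcong Rl" using wcong_ctx[of _ _ Rl "a@[g]" "[]"] by simp
  have c4: "(a@[g]@K@c, a@[g]@c) \<in> wcong Rl" using wcong_ctx[OF low_absorb_r[OF g(1) g(2) K(1)], of a c] by simp
  have "(a'@[g']@c', a@[g]@c) \<in> wcong Rl"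
    using wcong_trans[OF wcong_trans[OF wcong_trans[OF c1 c2] c3] c4] .
  then show ?thesis by (rule wcong_sym)
qed

lemma gen_all: "\<exists>u\<in>lists XG. prod_list u = x"
proof -
  obtain E G where EG: "x = G*E" "E \<in> idems" "G \<in> units" using fact_ge by blast
  obtain f w where fw: "f \<in> L" "w \<in> units" "w*f*ginv w = E" using L_uniq[OF EG(2)] by blast
  have SX: "S \<subseteq> XG" unfolding XG_def by auto
  show ?thesis
  proof (cases "f = 1")
    case True
    then have "x \<in> units" using EG fw units_mult ginv_units by (metis mult_1_right)
    then obtain u where "u \<in> lists S" "prod_list u = x" using gen_S by blast
    then show ?thesis using SX by (intro bexI[of _ u]) auto
  next
    case False
    obtain u1 where u1: "u1 \<in> lists S" "prod_list u1 = G*w" using gen_S units_mult[OF EG(3) fw(2)] by blast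
    obtain u2 where u2: "u2 \<in> lists S" "prod_list u2 = ginv w" using gen_S ginv_units[OF fw(2)] by blast
    have "prod_list (u1@[f]@u2) = x" using u1 u2 EG(1) fw(3) by (simp add: mult.assoc)
    moreover have "u1@[f]@u2 \<in> lists XG" using u1 u2 SX fw(1) False unfolding XG_def by auto
    ultimately show ?thesis by blast
  qed
qed

lemma presents_main: "presents XG Rl"
  unfolding presents_def
proof (intro conjI allI ballI)
  fix x show "\<exists>u\<in>lists XG. prod_list u = x" by (rule gen_all)
next
  fix u v assume u: "u \<in> lists XG" and v: "v \<in> lists XG"
  show "prod_list u = prod_list v \<longleftrightarrow> (u, v) \<in> wcong Rl"
  proof
    assume "(u, v) \<in> wcong Rl" then show "prod_list u = prod_list v" by (rule sound)
  next
    assume eq: "prod_list u = prod_list v"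
    from NF[OF u] NF[OF v] show "(u, v) \<in> wcong Rl"
    proof (elim disjE exE conjE bexE)
      fix u' v' assume u': "u' \<in> lists S" "(u,u') \<in> wcong Rl" and v': "v' \<in> lists S" "(v,v') \<in> wcong Rl"
      have "prod_list u' = prod_list v'" using sound[OF u'(2)] sound[OF v'(2)] eq by simp
      then have "(u',v') \<in> wcong Rl" using wS u'(1) v'(1) by blast
      then show ?thesis using u'(2) wcong_sym[OF v'(2)] by (blast intro: wcong_trans)
    next
      fix u' a g c assume u': "u' \<in> lists S" "(u,u') \<in> wcong Rl" and
        agc: "a \<in> lists S" "c \<in> lists S" "g \<in> L" "g \<noteq> 1" "(v, a@[g]@c) \<in> wcong Rl"
      have "prod_list (a@[g]@c) = prod_list u'" using sound[OF u'(2)] sound[OF agc(5)] eq by simp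
      then have False using not_unit_nf[OF agc(1-4)] prod_units[OF u'(1)] by simp
      then show ?thesis ..
    next
      fix v' a g c assume v': "v' \<in> lists S" "(v,v') \<in> wcong Rl" and
        agc: "a \<in> lists S" "c \<in> lists S" "g \<in> L" "g \<noteq> 1" "(u, a@[g]@c) \<in> wcong Rl"
      have "prod_list (a@[g]@c) = prod_list v'" using sound[OF v'(2)] sound[OF agc(5)] eq by simp
      then have False using not_unit_nf[OF agc(1-4)] prod_units[OF v'(1)] by simp
      then show ?thesis ..
    next
      fix a g c a' g' c' assume
        agc: "a \<in> lists S" "c \<in> lists S" "g \<in> L" "g \<noteq> 1" "(u, a@[g]@c) \<in> wcong Rl" and
        agc': "a' \<in> lists S" "c' \<in> lists S" "g' \<in> L" "g' \<noteq> 1" "(v, a'@[g']@c') \<in> wcong Rl"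
      have "prod_list (a@[g]@c) = prod_list (a'@[g']@c')" using sound[OF agc(5)] sound[OF agc'(5)] eq by simp
      then have "(a@[g]@c, a'@[g']@c') \<in> wcong Rl" using uniq agc agc' by blast
      then show ?thesis using agc(5) wcong_sym[OF agc'(5)] by (blast intro: wcong_trans)
    qed
  qed
qed

end

theorem mainTheorem8:
  fixes \<Lambda> S :: "'a::monoid_mult set" and rw :: "'a \<Rightarrow> 'a list"
  assumes "gen_renner_coxeter \<Lambda> S"
    and "\<forall>w \<in> units. rw w \<in> lists S \<and> prod_list (rw w) = w \<and> length (rw w) = clen S w"
  shows "presents (S \<union> (\<Lambda> - {1}))
           (cox1_rels S \<union> cox2_rels S \<union> ren1_rels \<Lambda> S \<union> ren2_rels \<Lambda> S \<union> ren3_rels \<Lambda> S rw)"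
proof -
  have cs: "coxeter_system S" using assms(1) unfolding gen_renner_coxeter_def by (elim conjE) assumption
  interpret rcw S \<Lambda> rw
  proof (intro rcw.intro rc.intro cox.intro rcw_axioms.intro rc_axioms.intro)
    show "coxeter_system S" by (rule cs)
    show "gen_renner_coxeter \<Lambda> S" by (rule assms(1))
    show "\<forall>w \<in> units. rw w \<in> lists S \<and> prod_list (rw w) = w \<and> length (rw w) = clen S w" by (rule assms(2))
  qed
  show ?thesis using presents_main unfolding XG_def Rl_def .
qed



end
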